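(* Let $n \geq 0$ and $k \geq 1$ be integers. Let $\mathcal{H}$ be a separable infinite-dimensional complex Hilbert space with orthonormal basis $\{e_m\}_{m\geq 1}$. For $j\ge 0$ let $P_j$ be the orthogonal projection onto $\mathrm{span}\{e_1,\dots,e_j\}$ (with $P_0=0$), and let $S_k$ be the unilateral shift of multiplicity $k$, $S_k e_m = e_{m+k}$ for $m\geq 1$. Fix scalars $x^i_j\in\mathbb{C}$ for $1\le i\le n$, $1\le j\le n+k$, and define the finite rank operator $F$ by $$F(e_i)=x_1^ie_1+\cdots+x_{i+k-1}^ie_{i+k-1}+(x_{i+k}^i-1)e_{i+k}+x_{i+k+1}^ie_{i+k+1}+\cdots+x_{n+k}^ie_{n+k}\ \ (1\le i\le n),\qquad F(e_i)=0\ \ (i\geq n+1).$$ Set $F_1=F+S_kP_n$ and, for $r\geq 2$, $F_r=F_1^r+\sum_{j=1}^{r-1}S_k^{j}(I-P_n)F_1^{r-j}$. Let $T=S_k+F$, and assume that $T$ is a completely non-unitary contraction with finite-dimensional defect spaces such that $\mathcal{D}_T\subseteq\mathcal{D}_{T^*}$, $\dim\mathcal{D}_T=n$ and $\dim(\mathcal{D}_{T^*}\ominus\mathcal{D}_T)=k$. Then: (1) $\mathrm{rank}(P_n-F_1^*F_1)=n$; (2) $F_1(I-P_n)=(I-P_{n+k})F_1=0$; (3) there exists $\lambda\geq 0$ such that $\lambda\|F_1^*x\|^2-\|F_1x\|^2\leq \lambda \|P_{n+k} x\|^2-\|P_n x\|^2$ for all $x\in \mathcal{H}$; (4) for all $r\geq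 1$ and all $x\in\mathcal{H}$, $\|F_rx\|\leq \|P_n x\|$ and $\|F_r^*x\|\leq \|P_{n+kr}x\|$; moreover, the only $x\in\mathcal{H}$ satisfying $\|F_rx\|=\|P_nx\|$ and $\|F_r^*x\|=\|P_{n+kr}x\|$ for all $r\geq 1$ is $x=0$.
   Context: For a contraction $T$ (i.e. $\|T\|\le 1$) on a Hilbert space $\mathcal{H}$, the defect operators are $D_T=(I-T^*T)^{1/2}$ and $D_{T^*}=(I-TT^* )^{1/2}$, and the defect spaces are $\mathcal{D}_T=\overline{D_T\mathcal{H}}$ and $\mathcal{D}_{T^*}=\overline{D_{T^*}\mathcal{H}}$. A contraction $T$ is completely non-unitary (c.n.u.) if there is no nonzero closed subspace $\mathcal{M}$ reducing $T$ such that $T|_{\mathcal{M}}$ is unitary. *)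

theory Defs
  imports Complex_Main
begin

text \<open>Concrete model of the separable infinite-dimensional complex Hilbert space:
  vectors are coefficient sequences v with respect to the orthonormal basis e_1, e_2, ...;
  v m is the coefficient of e_m (m >= 1), the unused index 0 is forced to be 0.
  Operators are maps on sequences, only their behaviour on l2 matters.\<close>

type_synonym vec = "nat \<Rightarrow> complex"

definition l2 :: "vec set" where
  "l2 = {v. v 0 = 0 \<and> summable (\<lambda>m. (cmod (v m))^2)}"

definition l2_inner :: "vec \<Rightarrow> vec \<Rightarrow> complex" where
  "l2_inner u v = (\<Sum>m. cnj (u m) * v m)"

definition l2_norm :: "vec \<Rightarrow> real" where
  "l2_norm v = sqrt (\<Sum>m. (cmod (v m))^2)"

definition bounded_op :: "(vec \<Rightarrow> vec) \<Rightarrow> bool" where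
  "bounded_op A \<longleftrightarrow> (\<forall>v\<in>l2. A v \<in> l2)
     \<and> (\<forall>u\<in>l2. \<forall>v\<in>l2. \<forall>a b. A (\<lambda>m. a * u m + b * v m) = (\<lambda>m. a * A u m + b * A v m))
     \<and> (\<exists>C. \<forall>v\<in>l2. l2_norm (A v) \<le> C * l2_norm v)"

definition op_adj :: "(vec \<Rightarrow> vec) \<Rightarrow> (vec \<Rightarrow> vec)" where
  "op_adj A = (SOME B. bounded_op B \<and> (\<forall>u\<in>l2. \<forall>v\<in>l2. l2_inner (A u) v = l2_inner u (B v)))"

definition positive_op :: "(vec \<Rightarrow> vec) \<Rightarrow> bool" where
  "positive_op B \<longleftrightarrow> bounded_op B \<and>
     (\<forall>v\<in>l2. l2_inner v (B v) \<in> \<real> \<and> 0 \<le> Re (l2_inner v (B v)))"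

definition op_sqrt :: "(vec \<Rightarrow> vec) \<Rightarrow> (vec \<Rightarrow> vec)" where
  "op_sqrt A = (SOME B. positive_op B \<and> (\<forall>v\<in>l2. B (B v) = A v))"

definition l2_closure :: "vec set \<Rightarrow> vec set" where
  "l2_closure M = {v\<in>l2. \<forall>e>0. \<exists>u\<in>M. l2_norm (\<lambda>m. v m - u m) < e}"

definition closed_subspace :: "vec set \<Rightarrow> bool" where
  "closed_subspace M \<longleftrightarrow> M \<subseteq> l2 \<and> (\<lambda>m. 0) \<in> M
     \<and> (\<forall>u\<in>M. \<forall>v\<in>M. \<forall>a b. (\<lambda>m. a * u m + b * v m) \<in> M)
     \<and> l2_closure M = M"

definition orth_diff :: "vec set \<Rightarrow> vec set \<Rightarrow> vec set" where
  "orth_diff N M = {v\<in>N. \<forall>u\<in>M. l2_inner u v = 0}"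

definition has_dim :: "vec set \<Rightarrow> nat \<Rightarrow> bool" where
  "has_dim M d \<longleftrightarrow> (\<exists>b :: nat \<Rightarrow> vec.
      M = {(\<lambda>m. \<Sum>i<d. c i * b i m) | c. True}
    \<and> (\<forall>c. (\<lambda>m. \<Sum>i<d. c i * b i m) = (\<lambda>m. 0) \<longrightarrow> (\<forall>i<d. c i = 0)))"

definition is_contraction :: "(vec \<Rightarrow> vec) \<Rightarrow> bool" where
  "is_contraction T \<longleftrightarrow> bounded_op T \<and> (\<forall>v\<in>l2. l2_norm (T v) \<le> l2_norm v)"

definition defect_space :: "(vec \<Rightarrow> vec) \<Rightarrow> vec set" where
  "defect_space T = l2_closure (op_sqrt (\<lambda>v m. v m - op_adj T (T v) m) ` l2)"

definition reduces :: "vec set \<Rightarrow> (vec \<Rightarrow> vec) \<Rightarrow> bool" where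
  "reduces M T \<longleftrightarrow> closed_subspace M \<and> T ` M \<subseteq> M \<and> op_adj T ` M \<subseteq> M"

definition cnu :: "(vec \<Rightarrow> vec) \<Rightarrow> bool" where
  "cnu T \<longleftrightarrow> \<not> (\<exists>M. M \<noteq> {\<lambda>m. 0} \<and> reduces M T
      \<and> (\<forall>v\<in>M. l2_norm (T v) = l2_norm v) \<and> T ` M = M)"

definition shift :: "nat \<Rightarrow> vec \<Rightarrow> vec" where
  "shift k v = (\<lambda>m. if k < m then v (m - k) else 0)"

definition proj :: "nat \<Rightarrow> vec \<Rightarrow> vec" where
  "proj j v = (\<lambda>m. if 1 \<le> m \<and> m \<le> j then v m else 0)"

text \<open>The finite rank operator F; x i j stands for x^i_j, the coefficient of e_j in T e_i.\<close>
definition Fop :: "nat \<Rightarrow> nat \<Rightarrow> (nat \<Rightarrow> nat \<Rightarrow> complex) \<Rightarrow> vec \<Rightarrow> vec" where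
  "Fop n k x v = (\<lambda>m. \<Sum>i=1..n. v i *
      (if 1 \<le> m \<and> m \<le> n + k then x i m - (if m = i + k then 1 else 0) else 0))"

definition F1op :: "nat \<Rightarrow> nat \<Rightarrow> (nat \<Rightarrow> nat \<Rightarrow> complex) \<Rightarrow> vec \<Rightarrow> vec" where
  "F1op n k x v = (\<lambda>m. Fop n k x v m + shift k (proj n v) m)"

definition Frop :: "nat \<Rightarrow> nat \<Rightarrow> (nat \<Rightarrow> nat \<Rightarrow> complex) \<Rightarrow> nat \<Rightarrow> vec \<Rightarrow> vec" where
  "Frop n k x r v = (\<lambda>m. (F1op n k x ^^ r) v m
      + (\<Sum>j=1..r-1. (shift k ^^ j)
           (\<lambda>m'. (F1op n k x ^^ (r - j)) v m' - proj n ((F1op n k x ^^ (r - j)) v) m') m))"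

definition Top :: "nat \<Rightarrow> nat \<Rightarrow> (nat \<Rightarrow> nat \<Rightarrow> complex) \<Rightarrow> vec \<Rightarrow> vec" where
  "Top n k x v = (\<lambda>m. shift k v m + Fop n k x v m)"

end

theory Submission
  imports Defs "HOL-Analysis.L2_Norm" "HOL-Computational_Algebra.Formal_Power_Series" "Jordan_Normal_Form.Determinant"
begin

definition ev :: "nat \<Rightarrow> nat \<Rightarrow> complex" where "ev j = (\<lambda>m. if m = j then 1 else 0)"
definition supp_in :: "nat \<Rightarrow> (nat \<Rightarrow> complex) \<Rightarrow> bool" where
  "supp_in N v \<longleftrightarrow> (\<forall>m. (m = 0 \<or> N < m) \<longrightarrow> v m = 0)"
definition nrm :: "nat \<Rightarrow> (nat \<Rightarrow> complex) \<Rightarrow> real" where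
  "nrm N v = L2_set (\<lambda>m. cmod (v m)) {1..N}"
definition ip :: "nat \<Rightarrow> (nat \<Rightarrow> complex) \<Rightarrow> (nat \<Rightarrow> complex) \<Rightarrow> complex" where
  "ip N u v = (\<Sum>m=1..N. cnj (u m) * v m)"

lemma supp_in_zero: assumes "supp_in N v" "m \<notin> {1..N}" shows "v m = 0"
proof -
  have "m = 0 \<or> N < m" using assms(2) by auto
  thus ?thesis using assms(1) unfolding supp_in_def by blast
qed

lemma suminf_supp: fixes f :: "nat \<Rightarrow> 'a::{comm_monoid_add,t2_space}" assumes "\<And>m. m \<notin> {1..N} \<Longrightarrow> f m = 0" shows "suminf f = sum f {1..N}"
  using assms by (intro suminf_finite) auto

lemma sums_supp: fixes f :: "nat \<Rightarrow> 'a::{comm_monoid_add,t2_space}" shows "(\<And>m. m \<notin> {1..N} \<Longrightarrow> f m = 0) \<Longrightarrow> summable f"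
  by (rule summable_finite[of "{1..N}"]) auto

lemma supp_in_l2: assumes "supp_in N v" shows "v \<in> l2"
proof -
  have "summable (\<lambda>m. (cmod (v m))^2)"
    by (rule sums_supp[of N]) (simp add: supp_in_zero[OF assms])
  moreover have "v 0 = 0" using assms unfolding supp_in_def by simp
  ultimately show ?thesis unfolding l2_def by simp
qed

lemma supp_in_norm: assumes "supp_in N v" shows "l2_norm v = nrm N v"
proof -
  have "(\<Sum>m. (cmod (v m))^2) = (\<Sum>m=1..N. (cmod (v m))^2)"
    by (rule suminf_supp) (simp add: supp_in_zero[OF assms])
  thus ?thesis unfolding l2_norm_def nrm_def L2_set_def by simp
qed

lemma supp_in_inner1: assumes "supp_in N v" shows "l2_inner u v = ip N u v"
proof -
  have "(\<Sum>m. cnj (u m) * v m) = (\<Sum>m=1..N. cnj (u m) * v m)"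
    by (rule suminf_supp) (simp add: supp_in_zero[OF assms])
  thus ?thesis unfolding l2_inner_def ip_def by simp
qed

lemma supp_in_inner2: assumes "supp_in N u" shows "l2_inner u v = ip N u v"
proof -
  have "(\<Sum>m. cnj (u m) * v m) = (\<Sum>m=1..N. cnj (u m) * v m)"
    by (rule suminf_supp) (simp add: supp_in_zero[OF assms])
  thus ?thesis unfolding l2_inner_def ip_def by simp
qed

lemma supp_in_mono: "supp_in N v \<Longrightarrow> N \<le> M \<Longrightarrow> supp_in M v"
  unfolding supp_in_def by auto

lemma ev_supp: "1 \<le> j \<Longrightarrow> supp_in j (ev j)"
  unfolding supp_in_def ev_def by auto

lemma ip_ev: assumes "1 \<le> j" "j \<le> N" shows "ip N (ev j) u = u j"
proof -
  have "ip N (ev j) u = (\<Sum>m\<in>{1..N}. if m = j then u m else 0)"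
    unfolding ip_def by (rule sum.cong) (auto simp: ev_def)
  also have "\<dots> = u j" using assms by (simp add: sum.delta')
  finally show ?thesis .
qed

lemma inner_ev: "1 \<le> j \<Longrightarrow> l2_inner (ev j) u = u j"
  using supp_in_inner2[OF ev_supp, of j u] ip_ev[of j j u] by simp

lemma ev_l2: "1 \<le> j \<Longrightarrow> ev j \<in> l2"
  using supp_in_l2 ev_supp by blast

lemma l2_summable: "v \<in> l2 \<Longrightarrow> summable (\<lambda>m. (cmod (v m))^2)"
  unfolding l2_def by auto

lemma l2_zero0: "v \<in> l2 \<Longrightarrow> v 0 = 0"
  unfolding l2_def by auto

lemma prod_summable:
  assumes "u \<in> l2" "v \<in> l2"
  shows "summable (\<lambda>m. norm (cnj (u m) * v m))"
proof (rule summable_comparison_test')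
  show "summable (\<lambda>m. ((cmod (u m))^2 + (cmod (v m))^2) / 2)"
    using l2_summable[OF assms(1)] l2_summable[OF assms(2)]
    by (intro summable_divide summable_add)
  fix m :: nat assume "m \<ge> 0"
  have "cmod (u m) * cmod (v m) \<le> ((cmod (u m))^2 + (cmod (v m))^2) / 2"
    using sum_squares_bound[of "cmod (u m)" "cmod (v m)"] by (simp add: power2_eq_square)
  then show "norm (norm (cnj (u m) * v m)) \<le> ((cmod (u m))^2 + (cmod (v m))^2) / 2"
    by (simp add: norm_mult)
qed

lemma prod_summable': "u \<in> l2 \<Longrightarrow> v \<in> l2 \<Longrightarrow> summable (\<lambda>m. cnj (u m) * v m)"
  by (rule summable_norm_cancel[OF prod_summable])

lemma lin_l2:
  assumes "u \<in> l2" "v \<in> l2"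
  shows "(\<lambda>m. a * u m + b * v m) \<in> l2"
proof -
  have "summable (\<lambda>m. (cmod (a * u m + b * v m))^2)"
  proof (rule summable_comparison_test')
    show "summable (\<lambda>m. 2 * (cmod a)^2 * (cmod (u m))^2 + 2 * (cmod b)^2 * (cmod (v m))^2)"
      using l2_summable[OF assms(1)] l2_summable[OF assms(2)]
      by (intro summable_add summable_mult)
    fix m :: nat assume "m \<ge> 0"
    have "cmod (a * u m + b * v m) \<le> cmod a * cmod (u m) + cmod b * cmod (v m)"
      by (metis norm_mult norm_triangle_ineq)
    hence "(cmod (a * u m + b * v m))^2 \<le> (cmod a * cmod (u m) + cmod b * cmod (v m))^2"
      by (simp add: power_mono)
    also have "\<dots> \<le> 2 * (cmod a)^2 * (cmod (u m))^2 + 2 * (cmod b)^2 * (cmod (v m))^2"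
      using sum_squares_bound[of "cmod a * cmod (u m)" "cmod b * cmod (v m)"]
      by (simp add: power2_eq_square algebra_simps)
    finally show "norm ((cmod (a * u m + b * v m))^2) \<le> 2 * (cmod a)^2 * (cmod (u m))^2 + 2 * (cmod b)^2 * (cmod (v m))^2"
      by simp
  qed
  thus ?thesis using assms unfolding l2_def by auto
qed

lemma inner_lin_right:
  assumes "u \<in> l2" "v \<in> l2" "w \<in> l2"
  shows "l2_inner u (\<lambda>m. a * v m + b * w m) = a * l2_inner u v + b * l2_inner u w"
proof -
  have s1: "summable (\<lambda>m. cnj (u m) * v m)" "summable (\<lambda>m. cnj (u m) * w m)"
    using prod_summable' assms by auto
  have "l2_inner u (\<lambda>m. a * v m + b * w m) = (\<Sum>m. a * (cnj (u m) * v m) + b * (cnj (u m) * w m))"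
    unfolding l2_inner_def by (simp add: algebra_simps)
  also have "\<dots> = (\<Sum>m. a * (cnj (u m) * v m)) + (\<Sum>m. b * (cnj (u m) * w m))"
    by (rule suminf_add[symmetric]) (use s1 in \<open>auto intro: summable_mult\<close>)
  also have "\<dots> = a * l2_inner u v + b * l2_inner u w"
    unfolding l2_inner_def using s1 by (simp add: suminf_mult)
  finally show ?thesis .
qed

lemma inner_cnj:
  assumes "u \<in> l2" "v \<in> l2"
  shows "l2_inner u v = cnj (l2_inner v u)"
proof -
  have "(\<lambda>m. cnj (v m) * u m) sums l2_inner v u"
    unfolding l2_inner_def using prod_summable'[OF assms(2,1)] by (rule summable_sums)
  hence "(\<lambda>m. cnj (cnj (v m) * u m)) sums cnj (l2_inner v u)"
    by (rule iffD2[OF sums_cnj])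
  hence "cnj (l2_inner v u) = (\<Sum>m. cnj (cnj (v m) * u m))"
    by (rule sums_unique)
  thus ?thesis unfolding l2_inner_def by (simp add: mult.commute)
qed

lemma inner_lin_left:
  assumes "u \<in> l2" "v \<in> l2" "w \<in> l2"
  shows "l2_inner (\<lambda>m. a * v m + b * w m) u = cnj a * l2_inner v u + cnj b * l2_inner w u"
proof -
  have "l2_inner (\<lambda>m. a * v m + b * w m) u = cnj (l2_inner u (\<lambda>m. a * v m + b * w m))"
    using inner_cnj lin_l2 assms by blast
  also have "\<dots> = cnj (a * l2_inner u v + b * l2_inner u w)"
    using inner_lin_right assms by simp
  also have "\<dots> = cnj a * cnj (l2_inner u v) + cnj b * cnj (l2_inner u w)"
    by simp
  also have "\<dots> = cnj a * l2_inner v u + cnj b * l2_inner w u"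
    using inner_cnj[of v u] inner_cnj[of w u] assms by metis
  finally show ?thesis .
qed

lemma inner_self: "v \<in> l2 \<Longrightarrow> l2_inner v v = of_real ((l2_norm v)^2)"
proof -
  assume v: "v \<in> l2"
  have eq: "\<And>m. cnj (v m) * v m = complex_of_real ((cmod (v m))^2)"
    by (metis complex_norm_square mult.commute of_real_power)
  have "l2_inner v v = (\<Sum>m. complex_of_real ((cmod (v m))^2))"
    unfolding l2_inner_def eq by simp
  also have "\<dots> = of_real (\<Sum>m. (cmod (v m))^2)"
    by (rule suminf_of_real[OF l2_summable[OF v], symmetric])
  also have "(\<Sum>m. (cmod (v m))^2) = (l2_norm v)^2"
    unfolding l2_norm_def using suminf_nonneg[OF l2_summable[OF v]] by simp
  finally show ?thesis .
qed

lemma l2_norm_nonneg: "v \<in> l2 \<Longrightarrow> 0 \<le> l2_norm v"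
  unfolding l2_norm_def using suminf_nonneg[OF l2_summable] by simp

lemma comp_le_norm:
  assumes "v \<in> l2" shows "cmod (v m) \<le> l2_norm v"
proof -
  have "sum (\<lambda>m. (cmod (v m))^2) {m} \<le> (\<Sum>m. (cmod (v m))^2)"
    by (rule sum_le_suminf[OF l2_summable[OF assms]]) simp_all
  hence "(cmod (v m))^2 \<le> (\<Sum>m. (cmod (v m))^2)" by simp
  thus ?thesis unfolding l2_norm_def by (rule real_le_rsqrt)
qed

lemma l2_norm_zero: "v \<in> l2 \<Longrightarrow> l2_norm v = 0 \<Longrightarrow> v = (\<lambda>m. 0)"
  using comp_le_norm by (metis norm_le_zero_iff ext)

definition fop :: "nat \<Rightarrow> (nat \<Rightarrow> nat \<Rightarrow> complex) \<Rightarrow> (nat \<Rightarrow> complex) \<Rightarrow> nat \<Rightarrow> complex" where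
  "fop p a v = (\<lambda>m. \<Sum>i=1..p. v i * a i m)"
definition fadj :: "nat \<Rightarrow> nat \<Rightarrow> (nat \<Rightarrow> nat \<Rightarrow> complex) \<Rightarrow> (nat \<Rightarrow> complex) \<Rightarrow> nat \<Rightarrow> complex" where
  "fadj p q a u = (\<lambda>i. if 1 \<le> i \<and> i \<le> p then \<Sum>m=1..q. cnj (a i m) * u m else 0)"
definition good :: "nat \<Rightarrow> (nat \<Rightarrow> nat \<Rightarrow> complex) \<Rightarrow> bool" where
  "good q a \<longleftrightarrow> (\<forall>i m. (m = 0 \<or> q < m) \<longrightarrow> a i m = 0)"

lemma fop_supp: "good q a \<Longrightarrow> supp_in q (fop p a v)"
  unfolding good_def supp_in_def fop_def by auto

lemma fadj_supp: "supp_in p (fadj p q a u)"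
  unfolding supp_in_def fadj_def by auto

lemma fop_lin: "fop p a (\<lambda>m. \<alpha> * u m + \<beta> * w m) = (\<lambda>m. \<alpha> * fop p a u m + \<beta> * fop p a w m)"
  unfolding fop_def by (auto simp: sum_distrib_left sum.distrib algebra_simps intro!: ext)

lemma fadj_lin: "fadj p q a (\<lambda>m. \<alpha> * u m + \<beta> * w m) = (\<lambda>m. \<alpha> * fadj p q a u m + \<beta> * fadj p q a w m)"
  unfolding fadj_def by (auto simp: sum_distrib_left sum.distrib algebra_simps intro!: ext)

lemma bound_generic:
  assumes "supp_in q w" "\<And>m. cmod (w m) \<le> K m * c" "0 \<le> c"
  shows "l2_norm w \<le> (\<Sum>m=1..q. K m) * c"
proof -
  have "l2_norm w = L2_set (\<lambda>m. cmod (w m)) {1..q}"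
    using supp_in_norm[OF assms(1)] unfolding nrm_def .
  also have "\<dots> \<le> (\<Sum>m=1..q. cmod (w m))"
    by (rule L2_set_le_sum) auto
  also have "\<dots> \<le> (\<Sum>m=1..q. K m * c)"
    by (rule sum_mono) (use assms in auto)
  also have "\<dots> = (\<Sum>m=1..q. K m) * c"
    by (simp add: sum_distrib_right)
  finally show ?thesis .
qed

lemma fop_comp_bound:
  assumes "v \<in> l2"
  shows "cmod (fop p a v m) \<le> (\<Sum>i=1..p. cmod (a i m)) * l2_norm v"
proof -
  have "cmod (fop p a v m) \<le> (\<Sum>i=1..p. cmod (v i * a i m))"
    unfolding fop_def by (rule norm_sum)
  also have "\<dots> \<le> (\<Sum>i=1..p. l2_norm v * cmod (a i m))"
    by (rule sum_mono) (simp add: norm_mult mult_right_mono comp_le_norm[OF assms])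
  finally show ?thesis by (simp add: sum_distrib_left mult.commute)
qed

lemma fadj_comp_bound:
  assumes "v \<in> l2"
  shows "cmod (fadj p q a v i) \<le> (\<Sum>m=1..q. cmod (a i m)) * l2_norm v"
proof (cases "1 \<le> i \<and> i \<le> p")
  case True
  have "cmod (fadj p q a v i) \<le> (\<Sum>m=1..q. cmod (cnj (a i m) * v m))"
    unfolding fadj_def using True by (simp add: norm_sum)
  also have "\<dots> \<le> (\<Sum>m=1..q. l2_norm v * cmod (a i m))"
    by (rule sum_mono) (simp add: norm_mult mult_right_mono comp_le_norm[OF assms] mult.commute)
  finally show ?thesis by (simp add: sum_distrib_left mult.commute)
next
  case False
  hence "fadj p q a v i = 0" unfolding fadj_def by auto
  then show ?thesis using l2_norm_nonneg[OF assms]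
    by (simp add: sum_nonneg)
qed

lemma fop_bounded: assumes "good q a" shows "bounded_op (fop p a)"
  unfolding bounded_op_def
proof (intro conjI ballI allI exI)
  fix v :: "nat \<Rightarrow> complex" assume "v \<in> l2"
  show "fop p a v \<in> l2" using fop_supp[OF assms] supp_in_l2 by blast
next
  fix u v :: "nat \<Rightarrow> complex" and \<alpha> \<beta>
  show "fop p a (\<lambda>m. \<alpha> * u m + \<beta> * v m) = (\<lambda>m. \<alpha> * fop p a u m + \<beta> * fop p a v m)"
    by (rule fop_lin)
next
  fix v :: "nat \<Rightarrow> complex" assume v: "v \<in> l2"
  show "l2_norm (fop p a v) \<le> (\<Sum>m=1..q. \<Sum>i=1..p. cmod (a i m)) * l2_norm v"
    by (rule bound_generic[OF fop_supp[OF assms] fop_comp_bound[OF v] l2_norm_nonneg[OF v]])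
qed

lemma fadj_bounded: "bounded_op (fadj p q a)"
  unfolding bounded_op_def
proof (intro conjI ballI allI exI)
  fix v :: "nat \<Rightarrow> complex" assume "v \<in> l2"
  show "fadj p q a v \<in> l2" using fadj_supp supp_in_l2 by blast
next
  fix u v :: "nat \<Rightarrow> complex" and \<alpha> \<beta>
  show "fadj p q a (\<lambda>m. \<alpha> * u m + \<beta> * v m) = (\<lambda>m. \<alpha> * fadj p q a u m + \<beta> * fadj p q a v m)"
    by (rule fadj_lin)
next
  fix v :: "nat \<Rightarrow> complex" assume v: "v \<in> l2"
  show "l2_norm (fadj p q a v) \<le> (\<Sum>i=1..p. \<Sum>m=1..q. cmod (a i m)) * l2_norm v"
    by (rule bound_generic[OF fadj_supp fadj_comp_bound[OF v] l2_norm_nonneg[OF v]])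
qed

lemma fop_adj_ident:
  assumes "good q a"
  shows "l2_inner (fop p a u) v = l2_inner u (fadj p q a v)"
proof -
  have "l2_inner (fop p a u) v = ip q (fop p a u) v"
    by (rule supp_in_inner2[OF fop_supp[OF assms]])
  also have "\<dots> = (\<Sum>m=1..q. \<Sum>i=1..p. cnj (u i) * (cnj (a i m) * v m))"
    unfolding ip_def fop_def by (simp add: sum_distrib_left sum_distrib_right mult_ac)
  also have "\<dots> = (\<Sum>i=1..p. \<Sum>m=1..q. cnj (u i) * (cnj (a i m) * v m))"
    by (rule sum.swap)
  also have "\<dots> = ip p u (fadj p q a v)"
    unfolding ip_def fadj_def by (simp add: sum_distrib_left)
  also have "\<dots> = l2_inner u (fadj p q a v)"
    by (rule supp_in_inner1[OF fadj_supp, symmetric])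
  finally show ?thesis .
qed

lemma adj_unique:
  assumes "bounded_op B" "bounded_op B'"
    and "\<forall>u\<in>l2. \<forall>v\<in>l2. l2_inner (A u) v = l2_inner u (B v)"
    and "\<forall>u\<in>l2. \<forall>v\<in>l2. l2_inner (A u) v = l2_inner u (B' v)"
    and v: "v \<in> l2"
  shows "B v = B' v"
proof
  fix m
  have Bv: "B v \<in> l2" "B' v \<in> l2" using assms v unfolding bounded_op_def by auto
  show "B v m = B' v m"
  proof (cases "m = 0")
    case True then show ?thesis using Bv l2_zero0 by metis
  next
    case False
    hence m: "1 \<le> m" by simp
    have "B v m = l2_inner (ev m) (B v)" using inner_ev[OF m] by simp
    also have "\<dots> = l2_inner (A (ev m)) v" using assms(3) ev_l2[OF m] v by simp
    also have "\<dots> = l2_inner (ev m) (B' v)" using assms(4) ev_l2[OF m] v by simp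
    also have "\<dots> = B' v m" using inner_ev[OF m] by simp
    finally show ?thesis .
  qed
qed

lemma op_adj_eq:
  assumes "bounded_op B" "\<forall>u\<in>l2. \<forall>v\<in>l2. l2_inner (A u) v = l2_inner u (B v)" "v \<in> l2"
  shows "op_adj A v = B v"
proof -
  let ?P = "\<lambda>B. bounded_op B \<and> (\<forall>u\<in>l2. \<forall>v\<in>l2. l2_inner (A u) v = l2_inner u (B v))"
  have "?P (op_adj A)" unfolding op_adj_def by (rule someI[of ?P B]) (use assms in auto)
  thus ?thesis using adj_unique[where B="op_adj A" and B'=B and A=A] assms by blast
qed

lemma op_adj_fop:
  assumes "good q a" "v \<in> l2"
  shows "op_adj (fop p a) v = fadj p q a v"
  using op_adj_eq[OF fadj_bounded, where A="fop p a" and v=v] fop_adj_ident[OF assms(1)] assms(2) by blast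

locale opset =
  fixes n k :: nat and x :: "nat \<Rightarrow> nat \<Rightarrow> complex"
begin

definition X :: "nat \<Rightarrow> nat \<Rightarrow> complex" where
  "X i m = (if 1 \<le> m \<and> m \<le> n + k then x i m else 0)"
definition tail :: "(nat \<Rightarrow> complex) \<Rightarrow> nat \<Rightarrow> complex" where
  "tail v = (\<lambda>m. if n + k < m then v (m - k) else 0)"
definition tailadj :: "(nat \<Rightarrow> complex) \<Rightarrow> nat \<Rightarrow> complex" where
  "tailadj u = (\<lambda>i. if n < i then u (i + k) else 0)"
definition Tadj :: "(nat \<Rightarrow> complex) \<Rightarrow> nat \<Rightarrow> complex" where
  "Tadj u = (\<lambda>i. tailadj u i + fadj n (n + k) X u i)"
definition G :: "(nat \<Rightarrow> complex) \<Rightarrow> nat \<Rightarrow> complex" where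
  "G v = fadj n (n + k) X (fop n X v)"
definition Dc :: "(nat \<Rightarrow> complex) \<Rightarrow> nat \<Rightarrow> complex" where
  "Dc v = (\<lambda>i. proj n v i - G v i)"

lemma X_good: "good (n + k) X"
  unfolding good_def X_def by auto

lemma F1_eq: "F1op n k x = fop n X"
proof (intro ext)
  fix v :: "nat \<Rightarrow> complex" and m :: nat
  have d: "(\<Sum>i=1..n. v i * (if m = i + k then 1 else 0)) = (if k < m \<and> m - k \<le> n then v (m - k) else 0)"
  proof -
    have "(\<Sum>i=1..n. v i * (if m = i + k then 1 else 0)) = (\<Sum>i\<in>{1..n}. if i = m - k \<and> k < m then v i else 0)"
      by (rule sum.cong) auto
    also have "\<dots> = (if k < m \<and> m - k \<le> n then v (m - k) else 0)"
      by (cases "k < m") (auto simp: sum.delta')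
    finally show ?thesis .
  qed
  show "F1op n k x v m = fop n X v m"
  proof (cases "1 \<le> m \<and> m \<le> n + k")
    case True
    have "F1op n k x v m = (\<Sum>i=1..n. v i * x i m) - (\<Sum>i=1..n. v i * (if m = i + k then 1 else 0))
        + (if k < m \<and> m - k \<le> n then v (m - k) else 0)"
      unfolding F1op_def Fop_def shift_def proj_def using True
      by (auto simp: algebra_simps sum_subtractf[symmetric] intro!: sum.cong)
    also have "\<dots> = fop n X v m"
      unfolding d fop_def X_def using True by simp
    finally show ?thesis .
  next
    case False
    then show ?thesis
      unfolding F1op_def Fop_def shift_def proj_def fop_def X_def by auto
  qed
qed

lemma Top_eq: "Top n k x v = (\<lambda>m. tail v m + fop n X v m)"
proof (intro ext)
  fix m
  have "shift k v m = tail v m + shift k (proj n v) m"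
    unfolding shift_def tail_def proj_def by auto
  thus "Top n k x v m = tail v m + fop n X v m"
    unfolding Top_def F1_eq[symmetric] F1op_def by simp
qed

lemma tail_summ: "v \<in> l2 \<Longrightarrow> summable (\<lambda>m. (cmod (tail v m))^2)"
proof -
  assume v: "v \<in> l2"
  have "summable (\<lambda>m. (cmod (tail v (m + k)))^2)"
  proof (rule summable_comparison_test')
    show "summable (\<lambda>m. (cmod (v m))^2)" using l2_summable[OF v] .
    fix m :: nat assume "m \<ge> 0"
    show "norm ((cmod (tail v (m + k)))^2) \<le> (cmod (v m))^2"
      unfolding tail_def by auto
  qed
  thus ?thesis using summable_iff_shift[of "\<lambda>j. (cmod (tail v j))^2" k] by simp
qed

lemma tail_l2: "v \<in> l2 \<Longrightarrow> tail v \<in> l2"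
  using tail_summ unfolding l2_def tail_def by auto

lemma tailadj_summ: "u \<in> l2 \<Longrightarrow> summable (\<lambda>m. (cmod (tailadj u m))^2)"
proof -
  assume u: "u \<in> l2"
  have s: "summable (\<lambda>m. (cmod (u (m + k)))^2)"
    using l2_summable[OF u] summable_iff_shift[of "\<lambda>j. (cmod (u j))^2" k] by simp
  show ?thesis
  proof (rule summable_comparison_test'[OF s])
    fix m :: nat assume "m \<ge> 0"
    show "norm ((cmod (tailadj u m))^2) \<le> (cmod (u (m + k)))^2"
      unfolding tailadj_def by auto
  qed
qed

lemma tailadj_l2: "u \<in> l2 \<Longrightarrow> tailadj u \<in> l2"
  using tailadj_summ unfolding l2_def tailadj_def by auto

lemma tailadj_norm: assumes u: "u \<in> l2" shows "(l2_norm (tailadj u))^2 \<le> (l2_norm u)^2"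
proof -
  have s: "summable (\<lambda>m. (cmod (u (m + k)))^2)"
    using l2_summable[OF u] summable_iff_shift[of "\<lambda>j. (cmod (u j))^2" k] by simp
  have "(\<Sum>m. (cmod (tailadj u m))^2) \<le> (\<Sum>m. (cmod (u (m + k)))^2)"
    by (rule suminf_le[OF _ tailadj_summ[OF u] s]) (auto simp: tailadj_def)
  also have "\<dots> = (\<Sum>m. (cmod (u m))^2) - (\<Sum>i<k. (cmod (u i))^2)"
    by (rule suminf_minus_initial_segment[OF l2_summable[OF u]])
  also have "\<dots> \<le> (\<Sum>m. (cmod (u m))^2)"
    by (simp add: sum_nonneg)
  finally have "(\<Sum>m. (cmod (tailadj u m))^2) \<le> (\<Sum>m. (cmod (u m))^2)" .
  moreover have "0 \<le> (\<Sum>m. (cmod (tailadj u m))^2)"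
    by (rule suminf_nonneg[OF tailadj_summ[OF u]]) simp
  moreover have "0 \<le> (\<Sum>m. (cmod (u m))^2)"
    by (rule suminf_nonneg[OF l2_summable[OF u]]) simp
  ultimately show ?thesis unfolding l2_norm_def by simp
qed

lemma tail_adj_ident:
  assumes u: "u \<in> l2" and v: "v \<in> l2"
  shows "l2_inner (tail v) u = l2_inner v (tailadj u)"
proof -
  define g where "g m = cnj (tail v m) * u m" for m
  have sg: "summable g" unfolding g_def by (rule prod_summable'[OF tail_l2[OF v] u])
  have "l2_inner v (tailadj u) = (\<Sum>m. g (m + k))"
    unfolding l2_inner_def g_def tail_def tailadj_def by (rule arg_cong[where f=suminf]) auto
  also have "\<dots> = (\<Sum>m. g m) - (\<Sum>i<k. g i)"
    by (rule suminf_minus_initial_segment[OF sg])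
  also have "(\<Sum>i<k. g i) = 0"
    unfolding g_def tail_def by (auto intro!: sum.neutral)
  finally show ?thesis unfolding g_def l2_inner_def by simp
qed

lemma Tadj_lin: "Tadj (\<lambda>m. \<alpha> * u m + \<beta> * w m) = (\<lambda>m. \<alpha> * Tadj u m + \<beta> * Tadj w m)"
  unfolding Tadj_def fadj_lin tailadj_def by (auto simp: algebra_simps intro!: ext)

lemma Tadj_l2: assumes u: "u \<in> l2" shows "Tadj u \<in> l2"
proof -
  have "Tadj u = (\<lambda>m. 1 * tailadj u m + 1 * fadj n (n + k) X u m)"
    unfolding Tadj_def by simp
  thus ?thesis using lin_l2[OF tailadj_l2[OF u] supp_in_l2[OF fadj_supp], where a=1 and b=1] by simp
qed

lemma Tadj_bounded: "bounded_op Tadj"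
proof -
  obtain C where C: "\<forall>v\<in>l2. l2_norm (fadj n (n + k) X v) \<le> C * l2_norm v"
    using fadj_bounded[of n "n + k" X] unfolding bounded_op_def by blast
  have "l2_norm (Tadj u) \<le> sqrt (1 + C^2) * l2_norm u" if u: "u \<in> l2" for u
  proof -
    have pt: "(cmod (Tadj u m))^2 = (cmod (tailadj u m))^2 + (cmod (fadj n (n + k) X u m))^2" for m
      unfolding Tadj_def tailadj_def fadj_def by auto
    have s2: "summable (\<lambda>m. (cmod (fadj n (n + k) X u m))^2)"
      using supp_in_l2[OF fadj_supp] l2_summable by blast
    have "(\<Sum>m. (cmod (Tadj u m))^2) = (\<Sum>m. (cmod (tailadj u m))^2) + (\<Sum>m. (cmod (fadj n (n + k) X u m))^2)"
      unfolding pt by (rule suminf_add[OF tailadj_summ[OF u] s2, symmetric])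
    hence "(l2_norm (Tadj u))^2 = (l2_norm (tailadj u))^2 + (l2_norm (fadj n (n + k) X u))^2"
      using suminf_nonneg[OF tailadj_summ[OF u]] suminf_nonneg[OF s2]
      unfolding l2_norm_def by simp
    also have "\<dots> \<le> (l2_norm u)^2 + (C * l2_norm u)^2"
    proof (rule add_mono[OF tailadj_norm[OF u]])
      show "(l2_norm (fadj n (n + k) X u))^2 \<le> (C * l2_norm u)^2"
        using C u l2_norm_nonneg supp_in_l2[OF fadj_supp] by (metis power_mono)
    qed
    also have "\<dots> = (sqrt (1 + C^2) * l2_norm u)^2"
      by (simp add: power_mult_distrib algebra_simps)
    finally have "(l2_norm (Tadj u))^2 \<le> (sqrt (1 + C^2) * l2_norm u)^2" .
    thus ?thesis using l2_norm_nonneg[OF u]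
      by (meson power2_le_imp_le real_sqrt_ge_zero zero_le_mult_iff add_nonneg_nonneg zero_le_one zero_le_power2)
  qed
  thus ?thesis unfolding bounded_op_def using Tadj_l2 Tadj_lin by blast
qed

lemma Tadj_ident:
  assumes u: "u \<in> l2" and v: "v \<in> l2"
  shows "l2_inner (Top n k x v) u = l2_inner v (Tadj u)"
proof -
  have fv: "fop n X v \<in> l2" using supp_in_l2[OF fop_supp[OF X_good]] .
  have fu: "fadj n (n + k) X u \<in> l2" using supp_in_l2[OF fadj_supp] .
  have "l2_inner (Top n k x v) u = l2_inner (\<lambda>m. 1 * tail v m + 1 * fop n X v m) u"
    unfolding Top_eq by simp
  also have "\<dots> = l2_inner (tail v) u + l2_inner (fop n X v) u"
    using inner_lin_left[OF u tail_l2[OF v] fv, of 1 1] by simp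
  also have "\<dots> = l2_inner v (tailadj u) + l2_inner v (fadj n (n + k) X u)"
    using tail_adj_ident[OF u v] fop_adj_ident[OF X_good] by simp
  also have "\<dots> = l2_inner v (\<lambda>m. 1 * tailadj u m + 1 * fadj n (n + k) X u m)"
    using inner_lin_right[OF v tailadj_l2[OF u] fu, of 1 1] by simp
  also have "\<dots> = l2_inner v (Tadj u)"
    unfolding Tadj_def by simp
  finally show ?thesis .
qed

lemma op_adj_T: "u \<in> l2 \<Longrightarrow> op_adj (Top n k x) u = Tadj u"
  using op_adj_eq[OF Tadj_bounded, where A="Top n k x"] Tadj_ident by blast

lemma fop_X_zero: "n + k < m \<Longrightarrow> fop n X v m = 0"
  unfolding fop_def X_def by simp

lemma D_eq:
  assumes v: "v \<in> l2" and Tv: "Top n k x v \<in> l2"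
  shows "(\<lambda>m. v m - op_adj (Top n k x) (Top n k x v) m) = Dc v"
proof (intro ext)
  fix i
  have "fadj n (n + k) X (Top n k x v) = fadj n (n + k) X (fop n X v)"
    unfolding fadj_def Top_eq tail_def by (auto intro!: ext sum.cong)
  hence eq: "op_adj (Top n k x) (Top n k x v) i = tailadj (Top n k x v) i + G v i"
    unfolding op_adj_T[OF Tv] Tadj_def G_def by simp
  show "v i - op_adj (Top n k x) (Top n k x v) i = Dc v i"
  proof (cases "n < i")
    case True
    have "tailadj (Top n k x v) i = v i"
      unfolding tailadj_def Top_eq tail_def using True fop_X_zero[of "i + k" v] by simp
    moreover have "G v i = 0" unfolding G_def fadj_def using True by simp
    ultimately show ?thesis unfolding eq Dc_def proj_def using True by simp
  next
    case False
    have t0: "tailadj (Top n k x v) i = 0" unfolding tailadj_def using False by simp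
    show ?thesis
    proof (cases "i = 0")
      case True
      have "G v i = 0" unfolding G_def fadj_def using True by simp
      thus ?thesis unfolding eq Dc_def proj_def using True t0 l2_zero0[OF v] by simp
    next
      case False2: False
      thus ?thesis unfolding eq Dc_def proj_def using False t0 by simp
    qed
  qed
qed

end

lemma nrm_nonneg: "0 \<le> nrm N v" unfolding nrm_def by simp

lemma nrm_sq: "(nrm N v)^2 = (\<Sum>m=1..N. (cmod (v m))^2)"
  unfolding nrm_def L2_set_def by (simp add: sum_nonneg)

lemma ip_self_nrm: "ip N v v = of_real ((nrm N v)^2)"
proof -
  have eq: "\<And>m. cnj (v m) * v m = complex_of_real ((cmod (v m))^2)"
    by (metis complex_norm_square mult.commute of_real_power)
  show ?thesis unfolding ip_def nrm_sq eq by simp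
qed

lemma ip_CS: "cmod (ip N u v) \<le> nrm N u * nrm N v"
proof -
  have "cmod (ip N u v) \<le> (\<Sum>m=1..N. cmod (cnj (u m) * v m))"
    unfolding ip_def by (rule norm_sum)
  also have "\<dots> = (\<Sum>m=1..N. \<bar>cmod (u m)\<bar> * \<bar>cmod (v m)\<bar>)"
    by (simp add: norm_mult)
  also have "\<dots> \<le> nrm N u * nrm N v"
    unfolding nrm_def by (rule L2_set_mult_ineq)
  finally show ?thesis .
qed

lemma ip_cnj: "ip N u v = cnj (ip N v u)"
  unfolding ip_def by (simp add: mult.commute)

lemma comp_le_nrm: "1 \<le> m \<Longrightarrow> m \<le> N \<Longrightarrow> cmod (v m) \<le> nrm N v"
  unfolding nrm_def by (rule member_le_L2_set) auto

lemma nrm_cong: "(\<And>m. 1 \<le> m \<Longrightarrow> m \<le> N \<Longrightarrow> v m = w m) \<Longrightarrow> nrm N v = nrm N w"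
  unfolding nrm_def by (rule L2_set_cong) auto

lemma ip_cong: "(\<And>m. 1 \<le> m \<Longrightarrow> m \<le> N \<Longrightarrow> v m = w m) \<Longrightarrow> ip N u v = ip N u w"
  unfolding ip_def by (rule sum.cong) auto

lemma ip_cong1: "(\<And>m. 1 \<le> m \<Longrightarrow> m \<le> N \<Longrightarrow> v m = w m) \<Longrightarrow> ip N v u = ip N w u"
  unfolding ip_def by (rule sum.cong) auto

lemma nrm_supp_mono: "supp_in N v \<Longrightarrow> N \<le> M \<Longrightarrow> nrm M v = nrm N v"
  using supp_in_norm supp_in_mono by metis

lemma ip_supp_mono: "supp_in N v \<Longrightarrow> N \<le> M \<Longrightarrow> ip M u v = ip N u v"
  using supp_in_inner1 supp_in_mono by metis

lemma nrm_zero: "nrm N v = 0 \<Longrightarrow> 1 \<le> m \<Longrightarrow> m \<le> N \<Longrightarrow> v m = 0"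
  using comp_le_nrm[of m N v] by simp

lemma fop_local: "(\<And>i. 1 \<le> i \<Longrightarrow> i \<le> p \<Longrightarrow> v i = w i) \<Longrightarrow> fop p a v = fop p a w"
  unfolding fop_def by (intro ext sum.cong) auto

lemma fadj_local: "(\<And>m. 1 \<le> m \<Longrightarrow> m \<le> q \<Longrightarrow> u m = w m) \<Longrightarrow> fadj p q a u = fadj p q a w"
  unfolding fadj_def by (intro ext) (auto intro!: sum.cong)

lemma fop_sum: "fop p a (\<lambda>m. \<Sum>j\<in>J. f j m) = (\<lambda>m. \<Sum>j\<in>J. fop p a (f j) m)"
  unfolding fop_def sum_distrib_right by (rule ext, rule sum.swap)

lemma fop_scale: "fop p a (\<lambda>m. c * w m) = (\<lambda>m. c * fop p a w m)"
  unfolding fop_def by (auto simp: sum_distrib_left mult.assoc intro!: ext)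

lemma ip_fop_fadj: "good q a \<Longrightarrow> ip q (fop p a u) v = ip p u (fadj p q a v)"
  using fop_adj_ident supp_in_inner2[OF fop_supp] supp_in_inner1[OF fadj_supp] by metis

lemma fop_ev: "1 \<le> l \<Longrightarrow> l \<le> p \<Longrightarrow> fop p a (ev l) = a l"
proof (intro ext)
  fix m assume l: "1 \<le> l" "l \<le> p"
  have "fop p a (ev l) m = (\<Sum>i\<in>{1..p}. if i = l then a i m else 0)"
    unfolding fop_def ev_def by (rule sum.cong) auto
  also have "\<dots> = a l m" using l by (simp add: sum.delta')
  finally show "fop p a (ev l) m = a l m" .
qed

lemma supp_expand: "supp_in N w \<Longrightarrow> w = (\<lambda>i. \<Sum>p=1..N. w p * ev p i)"
proof (intro ext)
  fix i assume w: "supp_in N w"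
  have "(\<Sum>p=1..N. w p * ev p i) = (\<Sum>p\<in>{1..N}. if p = i then w p else 0)"
    unfolding ev_def by (rule sum.cong) auto
  also have "\<dots> = w i" using supp_in_zero[OF w, of i] by (auto simp: sum.delta')
  finally show "w i = (\<Sum>p=1..N. w p * ev p i)" by simp
qed

context opset begin

definition Gm :: "nat \<Rightarrow> nat \<Rightarrow> complex" where
  "Gm l i = (if 1 \<le> i \<and> i \<le> n then \<Sum>m=1..n+k. cnj (X i m) * X l m else 0)"

lemma G_fop: "G = fop n Gm"
proof (intro ext)
  fix v i
  show "G v i = fop n Gm v i"
  proof (cases "1 \<le> i \<and> i \<le> n")
    case True
    have "G v i = (\<Sum>m=1..n+k. \<Sum>l=1..n. cnj (X i m) * (v l * X l m))"
      unfolding G_def fadj_def fop_def using True by (simp add: sum_distrib_left)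
    also have "\<dots> = (\<Sum>l=1..n. \<Sum>m=1..n+k. cnj (X i m) * (v l * X l m))"
      by (rule sum.swap)
    also have "\<dots> = fop n Gm v i"
      unfolding fop_def Gm_def using True by (simp add: sum_distrib_left mult_ac)
    finally show ?thesis .
  next
    case False
    then show ?thesis unfolding G_def fadj_def fop_def Gm_def by auto
  qed
qed

lemma Gm_good: "good n Gm" unfolding good_def Gm_def by auto

lemma G_supp: "supp_in n (G v)" unfolding G_fop by (rule fop_supp[OF Gm_good])

lemma G_local: "(\<And>i. 1 \<le> i \<Longrightarrow> i \<le> n \<Longrightarrow> v i = w i) \<Longrightarrow> G v = G w"
  unfolding G_fop by (rule fop_local)

lemma ip_G: "ip n u (G v) = ip (n + k) (fop n X u) (fop n X v)"
  unfolding G_def using ip_fop_fadj[OF X_good] by metis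

lemma ip_G_sym: "ip n (G u) v = ip n u (G v)"
proof -
  have "ip n (G u) v = cnj (ip n v (G u))" by (rule ip_cnj)
  also have "\<dots> = cnj (ip (n + k) (fop n X v) (fop n X u))" unfolding ip_G ..
  also have "\<dots> = ip (n + k) (fop n X u) (fop n X v)" using ip_cnj by metis
  finally show ?thesis unfolding ip_G .
qed

abbreviation Gp :: "nat \<Rightarrow> (nat \<Rightarrow> complex) \<Rightarrow> nat \<Rightarrow> complex" where
  "Gp j \<equiv> G ^^ j"

lemma Gp_supp: "supp_in n z \<Longrightarrow> supp_in n (Gp j z)"
  by (induction j) (auto simp: G_supp)

lemma Gp_sym: "ip n u (Gp j v) = ip n (Gp j u) v"
proof (induction j arbitrary: u)
  case 0 then show ?case by simp
next
  case (Suc j)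
  have "ip n u (Gp (Suc j) v) = ip n (G u) (Gp j v)" using ip_G_sym by simp
  also have "\<dots> = ip n (Gp j (G u)) v" using Suc by simp
  also have "Gp j (G u) = Gp (Suc j) u" by (simp add: funpow_Suc_right del: funpow.simps)
  finally show ?case .
qed

lemma Gp_lin: "Gp j (\<lambda>m. \<Sum>p\<in>J. c p * w p m) = (\<lambda>m. \<Sum>p\<in>J. c p * Gp j (w p) m)"
proof (induction j)
  case 0 then show ?case by simp
next
  case (Suc j)
  have "Gp (Suc j) (\<lambda>m. \<Sum>p\<in>J. c p * w p m) = G (\<lambda>m. \<Sum>p\<in>J. c p * Gp j (w p) m)"
    using Suc by simp
  also have "\<dots> = (\<lambda>m. \<Sum>p\<in>J. c p * G (Gp j (w p)) m)"
    unfolding G_fop fop_sum fop_scale by simp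
  finally show ?case by simp
qed

lemma Gp_expand: "supp_in n w \<Longrightarrow> Gp j w = (\<lambda>i. \<Sum>p=1..n. w p * Gp j (ev p) i)"
proof -
  assume w: "supp_in n w"
  have "Gp j w = Gp j (\<lambda>i. \<Sum>p=1..n. w p * ev p i)"
    using supp_expand[OF w] by simp
  also have "\<dots> = (\<lambda>i. \<Sum>p=1..n. w p * Gp j (ev p) i)" by (rule Gp_lin)
  finally show ?thesis .
qed

lemma G_expand: "G v = (\<lambda>i. \<Sum>p=1..n. v p * G (ev p) i)"
proof (intro ext)
  fix i
  have "(\<Sum>p=1..n. v p * fop n Gm (ev p) i) = (\<Sum>p=1..n. v p * Gm p i)"
    by (rule sum.cong) (simp_all add: fop_ev)
  thus "G v i = (\<Sum>p=1..n. v p * G (ev p) i)" unfolding G_fop by (simp only: fop_def[of n Gm v])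
qed

end

locale opctr = opset +
  assumes ctr: "\<And>z. supp_in n z \<Longrightarrow> nrm (n + k) (fop n X z) \<le> nrm n z"
begin

lemma F_ctr: "nrm (n + k) (fop n X v) \<le> nrm n v"
proof -
  have "fop n X v = fop n X (proj n v)" by (rule fop_local) (simp add: proj_def)
  moreover have "supp_in n (proj n v)" unfolding supp_in_def proj_def by auto
  moreover have "nrm n (proj n v) = nrm n v" by (rule nrm_cong) (simp add: proj_def)
  ultimately show ?thesis using ctr by metis
qed

lemma sq_le_prod: fixes a b c :: real
  assumes "a^2 \<le> a * b" "0 \<le> a" "0 \<le> b" shows "a \<le> b"
proof (cases "a = 0")
  case True then show ?thesis using assms by simp
next
  case False
  hence "a > 0" using assms by simp
  thus ?thesis using assms(1) by (simp add: power2_eq_square)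
qed

lemma Fa_ctr: "nrm n (fadj n (n + k) X y) \<le> nrm (n + k) y"
proof -
  let ?w = "fadj n (n + k) X y"
  have "(nrm n ?w)^2 = cmod (ip n ?w ?w)" unfolding ip_self_nrm by (simp add: norm_power)
  also have "ip n ?w ?w = ip (n + k) (fop n X ?w) y" using ip_fop_fadj[OF X_good] by metis
  also have "cmod \<dots> \<le> nrm (n + k) (fop n X ?w) * nrm (n + k) y" by (rule ip_CS)
  also have "\<dots> \<le> nrm n ?w * nrm (n + k) y"
    by (rule mult_right_mono[OF F_ctr nrm_nonneg])
  finally show ?thesis using sq_le_prod nrm_nonneg by metis
qed

lemma G_ctr: "nrm n (G v) \<le> nrm n v"
  unfolding G_def using Fa_ctr F_ctr order_trans by metis

lemma Gp_ctr: "nrm n (Gp j v) \<le> nrm n v"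
  by (induction j) (auto intro: order_trans[OF G_ctr])

lemma Gp_entry: "1 \<le> i \<Longrightarrow> i \<le> n \<Longrightarrow> 1 \<le> l \<Longrightarrow> cmod (Gp j (ev l) i) \<le> 1"
proof -
  assume a: "1 \<le> i" "i \<le> n" "1 \<le> l"
  have "cmod (Gp j (ev l) i) \<le> nrm n (Gp j (ev l))" by (rule comp_le_nrm[OF a(1,2)])
  also have "\<dots> \<le> nrm n (ev l)" by (rule Gp_ctr)
  also have "\<dots> \<le> 1"
  proof -
    have "(nrm n (ev l))^2 = (\<Sum>m=1..n. (cmod (ev l m))^2)" by (rule nrm_sq)
    also have "\<dots> = (\<Sum>m\<in>{1..n}. if m = l then 1 else 0)"
      unfolding ev_def by (rule sum.cong) auto
    also have "\<dots> \<le> 1" by (simp add: sum.delta')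
    finally have "(nrm n (ev l))^2 \<le> 1^2" by simp
    thus ?thesis by (rule power2_le_imp_le) simp
  qed
  finally show ?thesis .
qed

lemma q_real_bound:
  assumes z: "supp_in n z"
  shows "\<exists>r. ip n z (Gp j z) = of_real r \<and> 0 \<le> r \<and> r \<le> (nrm n z)^2"
proof -
  define s where "s = j div 2"
  have "j = 2 * s \<or> j = 2 * s + 1" unfolding s_def by presburger
  then show ?thesis
  proof
    assume j: "j = 2 * s"
    have "Gp j z = Gp s (Gp s z)" unfolding j by (simp add: funpow_add mult_2)
    hence "ip n z (Gp j z) = ip n (Gp s z) (Gp s z)" using Gp_sym by metis
    also have "\<dots> = of_real ((nrm n (Gp s z))^2)" by (rule ip_self_nrm)
    moreover have "(nrm n (Gp s z))^2 \<le> (nrm n z)^2"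
      by (rule power_mono[OF Gp_ctr nrm_nonneg])
    ultimately show ?thesis by (intro exI[of _ "(nrm n (Gp s z))^2"]) simp
  next
    assume j: "j = 2 * s + 1"
    let ?w = "Gp s z"
    have jj: "j = s + Suc s" using j by simp
    have "Gp j z = Gp s (G ?w)" unfolding jj funpow_add comp_apply funpow.simps(2) by simp
    hence "ip n z (Gp j z) = ip n ?w (G ?w)" using Gp_sym by metis
    also have "\<dots> = ip (n + k) (fop n X ?w) (fop n X ?w)" by (rule ip_G)
    also have "\<dots> = of_real ((nrm (n + k) (fop n X ?w))^2)" by (rule ip_self_nrm)
    finally have e: "ip n z (Gp j z) = of_real ((nrm (n + k) (fop n X ?w))^2)" .
    have "nrm (n + k) (fop n X ?w) \<le> nrm n z" using F_ctr[of ?w] Gp_ctr[of s z] by linarith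
    hence "(nrm (n + k) (fop n X ?w))^2 \<le> (nrm n z)^2"
      by (rule power_mono[OF _ nrm_nonneg])
    thus ?thesis using e by (intro exI[of _ "(nrm (n + k) (fop n X ?w))^2"]) simp
  qed
qed

end

definition cf :: "nat \<Rightarrow> real" where "cf j = (-1)^j * ((1/2::real) gchoose j)"

lemma cf_0: "cf 0 = 1" unfolding cf_def by simp

lemma cf_Suc: "cf (Suc j) = cf j * (real j - 1/2) / (real j + 1)"
proof -
  have m: "(1/2::real) * ((1/2) gchoose j) = real j * ((1/2) gchoose j) + real (Suc j) * ((1/2) gchoose (Suc j))"
    by (rule gbinomial_mult_1)
  hence "((1/2::real) gchoose (Suc j)) = (1/2 - real j) * ((1/2) gchoose j) / (real j + 1)"
    by (simp add: field_simps)
  hence "cf (Suc j) = - ((-1)^j * ((1/2 - real j) * ((1/2) gchoose j) / (real j + 1)))"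
    unfolding cf_def by simp
  also have "\<dots> = cf j * (real j - 1/2) / (real j + 1)"
    unfolding cf_def by (simp add: field_simps)
  finally show ?thesis .
qed

lemma cf_nonpos: "1 \<le> j \<Longrightarrow> cf j \<le> 0"
proof (induction j)
  case 0 then show ?case by simp
next
  case (Suc j)
  show ?case
  proof (cases "j = 0")
    case True then show ?thesis using cf_Suc[of 0] cf_0 by simp
  next
    case False
    hence "cf j \<le> 0" using Suc by simp
    moreover have "0 \<le> (real j - 1/2) / (real j + 1)" using False by simp
    ultimately show ?thesis unfolding cf_Suc
      by (metis mult_nonpos_nonneg times_divide_eq_right)
  qed
qed

lemma cf_psum: "(\<Sum>i\<le>N. cf i) = (1 - 2 * real N) * cf N"
proof (induction N)
  case 0 then show ?case by (simp add: cf_0)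
next
  case (Suc N)
  have "(\<Sum>i\<le>Suc N. cf i) = (1 - 2 * real N) * cf N + cf (Suc N)"
    using Suc by simp
  also have "\<dots> = (1 - 2 * real (Suc N)) * cf (Suc N)"
    unfolding cf_Suc by (simp add: field_simps)
  finally show ?case .
qed

lemma cf_psum_nonneg: "0 \<le> (\<Sum>i\<le>N. cf i)"
proof (cases "N = 0")
  case True then show ?thesis by (simp add: cf_0)
next
  case False
  hence "cf N \<le> 0" "1 - 2 * real N \<le> 0" using cf_nonpos by auto
  thus ?thesis unfolding cf_psum by (simp add: mult_nonpos_nonpos)
qed

lemma cf_psum_nonneg': "0 \<le> (\<Sum>i<N. cf i)"
proof (cases N)
  case 0 then show ?thesis by simp
next
  case (Suc M)
  then show ?thesis using cf_psum_nonneg[of M] by (simp add: lessThan_Suc_atMost)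
qed

lemma cf_abs_psum: "(\<Sum>i<N. \<bar>cf i\<bar>) \<le> 2"
proof (cases N)
  case 0 then show ?thesis by simp
next
  case (Suc M)
  have "(\<Sum>i<N. \<bar>cf i\<bar>) = (\<Sum>i<N. 2 * (if i = 0 then cf i else 0) - cf i)"
  proof (rule sum.cong)
    fix i assume "i \<in> {..<N}"
    show "\<bar>cf i\<bar> = 2 * (if i = 0 then cf i else 0) - cf i"
      using cf_nonpos[of i] cf_0 by (cases "i = 0") auto
  qed simp
  also have "\<dots> = 2 * cf 0 - (\<Sum>i<N. cf i)"
    using Suc by (simp add: sum_subtractf sum_distrib_left[symmetric] sum.delta)
  also have "\<dots> \<le> 2" using cf_psum_nonneg'[of N] cf_0 by simp
  finally show ?thesis .
qed

lemma cf_abs_summable: "summable (\<lambda>j. \<bar>cf j\<bar>)"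
  by (rule summableI_nonneg_bounded[where x=2]) (simp_all add: cf_abs_psum)

lemma cf_summable: "summable cf"
  using cf_abs_summable summable_rabs_cancel by blast

lemma cf_suminf_nonneg: "0 \<le> suminf cf"
proof -
  have "(\<lambda>N. \<Sum>i<N. cf i) \<longlonglongrightarrow> suminf cf"
    using summable_LIMSEQ[OF cf_summable] .
  thus ?thesis by (rule LIMSEQ_le_const) (use cf_psum_nonneg' in auto)
qed

lemma cf_cauchy: "(\<Sum>a\<le>j. cf a * cf (j - a)) = (if j = 0 then 1 else if j = 1 then -1 else 0)"
proof -
  have "(\<Sum>a\<le>j. cf a * cf (j - a)) = (\<Sum>a\<le>j. (-1)^j * (((1/2::real) gchoose a) * ((1/2) gchoose (j - a))))"
  proof (rule sum.cong)
    fix a assume "a \<in> {..j}"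
    hence "(-1::real)^a * (-1)^(j - a) = (-1)^j" by (simp add: power_add[symmetric])
    thus "cf a * cf (j - a) = (-1)^j * (((1/2::real) gchoose a) * ((1/2) gchoose (j - a)))"
      unfolding cf_def by (metis (no_types, lifting) mult.assoc mult.left_commute)
  qed simp
  also have "\<dots> = (-1)^j * (\<Sum>a=0..j. ((1/2::real) gchoose a) * ((1/2) gchoose (j - a)))"
    by (simp add: sum_distrib_left atMost_atLeast0)
  also have "\<dots> = (-1)^j * ((1/2 + 1/2::real) gchoose j)"
    by (simp only: gbinomial_Vandermonde)
  also have "(1/2 + 1/2::real) = of_nat 1" by simp
  also have "(of_nat 1 gchoose j) = (of_nat (1 choose j) :: real)" by (rule binomial_gbinomial[symmetric])
  finally show ?thesis
    by (cases j) (auto simp: binomial_eq_0 split: nat.splits)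
qed

context opctr begin

definition Rm :: "nat \<Rightarrow> nat \<Rightarrow> complex" where
  "Rm i l = (\<Sum>j. complex_of_real (cf j) * Gp j (ev l) i)"

lemma Rm_nsumm:
  assumes "1 \<le> i" "i \<le> n" "1 \<le> l"
  shows "summable (\<lambda>j. norm (complex_of_real (cf j) * Gp j (ev l) i))"
proof (rule summable_comparison_test'[OF cf_abs_summable])
  fix j :: nat assume "j \<ge> 0"
  have "cmod (Gp j (ev l) i) \<le> 1" by (rule Gp_entry[OF assms])
  hence "\<bar>cf j\<bar> * cmod (Gp j (ev l) i) \<le> \<bar>cf j\<bar>"
    by (simp add: mult_left_le)
  thus "norm (norm (complex_of_real (cf j) * Gp j (ev l) i)) \<le> \<bar>cf j\<bar>"
    by (simp add: norm_mult)
qed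

lemma Rm_summ:
  assumes "1 \<le> i" "i \<le> n" "1 \<le> l"
  shows "summable (\<lambda>j. complex_of_real (cf j) * Gp j (ev l) i)"
  by (rule summable_norm_cancel[OF Rm_nsumm[OF assms]])

lemma ev_supp_n: "1 \<le> l \<Longrightarrow> l \<le> n \<Longrightarrow> supp_in n (ev l)"
  using ev_supp supp_in_mono by blast

lemma inner_j:
  assumes i: "1 \<le> i" "i \<le> n" and l: "1 \<le> l" "l \<le> n"
  shows "(\<Sum>p=1..n. \<Sum>a\<le>j. (complex_of_real (cf a) * Gp a (ev p) i) * (complex_of_real (cf (j - a)) * Gp (j - a) (ev l) p))
       = complex_of_real (\<Sum>a\<le>j. cf a * cf (j - a)) * Gp j (ev l) i"
proof -
  have "(\<Sum>p=1..n. \<Sum>a\<le>j. (complex_of_real (cf a) * Gp a (ev p) i) * (complex_of_real (cf (j - a)) * Gp (j - a) (ev l) p))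
      = (\<Sum>a\<le>j. \<Sum>p=1..n. (complex_of_real (cf a) * Gp a (ev p) i) * (complex_of_real (cf (j - a)) * Gp (j - a) (ev l) p))"
    by (rule sum.swap)
  also have "\<dots> = (\<Sum>a\<le>j. complex_of_real (cf a * cf (j - a)) * Gp j (ev l) i)"
  proof (rule sum.cong[OF refl])
    fix a assume a: "a \<in> {..j}"
    have w: "supp_in n (Gp (j - a) (ev l))" by (rule Gp_supp[OF ev_supp_n[OF l]])
    have "(\<Sum>p=1..n. (complex_of_real (cf a) * Gp a (ev p) i) * (complex_of_real (cf (j - a)) * Gp (j - a) (ev l) p))
        = complex_of_real (cf a * cf (j - a)) * (\<Sum>p=1..n. Gp (j - a) (ev l) p * Gp a (ev p) i)"
      by (simp add: sum_distrib_left mult_ac)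
    also have "(\<Sum>p=1..n. Gp (j - a) (ev l) p * Gp a (ev p) i) = Gp a (Gp (j - a) (ev l)) i"
      using fun_cong[OF Gp_expand[OF w, of a], of i] by simp
    also have "Gp a (Gp (j - a) (ev l)) = Gp j (ev l)"
    proof -
      have "a + (j - a) = j" using a by simp
      hence "Gp j = Gp a \<circ> Gp (j - a)" by (metis funpow_add)
      thus ?thesis by simp
    qed
    finally show "(\<Sum>p=1..n. (complex_of_real (cf a) * Gp a (ev p) i) * (complex_of_real (cf (j - a)) * Gp (j - a) (ev l) p))
        = complex_of_real (cf a * cf (j - a)) * Gp j (ev l) i" .
  qed
  also have "\<dots> = complex_of_real (\<Sum>a\<le>j. cf a * cf (j - a)) * Gp j (ev l) i"
    by (simp add: sum_distrib_right)
  finally show ?thesis .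
qed

lemma Rm_prod:
  assumes i: "1 \<le> i" "i \<le> n" and l: "1 \<le> l" "l \<le> n"
  shows "(\<Sum>p=1..n. Rm i p * Rm p l) = ev l i - G (ev l) i"
proof -
  define A where "A p j = complex_of_real (cf j) * Gp j (ev p) i" for p j
  define B where "B p j = complex_of_real (cf j) * Gp j (ev l) p" for p j
  have cp: "Rm i p * Rm p l = (\<Sum>j. \<Sum>a\<le>j. A p a * B p (j - a))"
    and sc: "summable (\<lambda>j. \<Sum>a\<le>j. A p a * B p (j - a))" if p: "p \<in> {1..n}" for p
  proof -
    have sa: "summable (\<lambda>j. norm (A p j))" unfolding A_def using Rm_nsumm[OF i, of p] p by simp
    have sb: "summable (\<lambda>j. norm (B p j))" unfolding B_def using Rm_nsumm[of p l] p l by simp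
    show "Rm i p * Rm p l = (\<Sum>j. \<Sum>a\<le>j. A p a * B p (j - a))"
      unfolding Rm_def A_def[symmetric] B_def[symmetric] using Cauchy_product[OF sa sb] by simp
    show "summable (\<lambda>j. \<Sum>a\<le>j. A p a * B p (j - a))"
      by (rule summable_Cauchy_product[OF sa sb])
  qed
  have "(\<Sum>p=1..n. Rm i p * Rm p l) = (\<Sum>p=1..n. \<Sum>j. \<Sum>a\<le>j. A p a * B p (j - a))"
    by (rule sum.cong[OF refl]) (rule cp)
  also have "\<dots> = (\<Sum>j. \<Sum>p=1..n. \<Sum>a\<le>j. A p a * B p (j - a))"
    by (rule suminf_sum[symmetric]) (rule sc)
  also have "\<dots> = (\<Sum>j. complex_of_real (\<Sum>a\<le>j. cf a * cf (j - a)) * Gp j (ev l) i)"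
    unfolding A_def B_def inner_j[OF i l] ..
  also have "\<dots> = (\<Sum>j\<in>{0,1}. complex_of_real (\<Sum>a\<le>j. cf a * cf (j - a)) * Gp j (ev l) i)"
    by (rule suminf_finite) (auto simp: cf_cauchy)
  also have "\<dots> = ev l i - G (ev l) i"
    by (simp add: cf_cauchy)
  finally show ?thesis .
qed

definition Bc :: "nat \<Rightarrow> nat \<Rightarrow> complex" where
  "Bc l i = (if 1 \<le> i \<and> i \<le> n then Rm i l else 0)"

lemma Bc_good: "good n Bc" unfolding good_def Bc_def by auto

lemma BB: "fop n Bc (fop n Bc v) = Dc v"
proof (intro ext)
  fix i
  show "fop n Bc (fop n Bc v) i = Dc v i"
  proof (cases "1 \<le> i \<and> i \<le> n")
    case True
    have "fop n Bc (fop n Bc v) i = (\<Sum>p=1..n. (\<Sum>l=1..n. v l * Rm p l) * Rm i p)"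
      unfolding fop_def Bc_def using True by (intro sum.cong) auto
    also have "\<dots> = (\<Sum>p=1..n. \<Sum>l=1..n. v l * (Rm i p * Rm p l))"
      by (simp add: sum_distrib_left sum_distrib_right mult_ac)
    also have "\<dots> = (\<Sum>l=1..n. \<Sum>p=1..n. v l * (Rm i p * Rm p l))"
      by (rule sum.swap)
    also have "\<dots> = (\<Sum>l=1..n. v l * (ev l i - G (ev l) i))"
    proof (rule sum.cong[OF refl])
      fix l assume l: "l \<in> {1..n}"
      have "(\<Sum>p=1..n. v l * (Rm i p * Rm p l)) = v l * (\<Sum>p=1..n. Rm i p * Rm p l)"
        by (simp add: sum_distrib_left)
      also have "\<dots> = v l * (ev l i - G (ev l) i)"
        using Rm_prod[of i l] True l by simp
      finally show "(\<Sum>p=1..n. v l * (Rm i p * Rm p l)) = v l * (ev l i - G (ev l) i)" .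
    qed
    also have "\<dots> = (\<Sum>l=1..n. v l * ev l i) - G v i"
      by (simp add: right_diff_distrib sum_subtractf fun_cong[OF G_expand[of v]])
    also have "(\<Sum>l=1..n. v l * ev l i) = v i"
    proof -
      have "(\<Sum>l=1..n. v l * ev l i) = (\<Sum>l\<in>{1..n}. if l = i then v l else 0)"
        unfolding ev_def by (rule sum.cong) auto
      thus ?thesis using True by (simp add: sum.delta')
    qed
    finally show ?thesis unfolding Dc_def proj_def using True by simp
  next
    case False
    have "G v i = 0" using supp_in_zero[OF G_supp[of v], of i] False by auto
    moreover have "fop n Bc (fop n Bc v) i = 0"
      using supp_in_zero[OF fop_supp[OF Bc_good, of n "fop n Bc v"], of i] False by auto
    ultimately show ?thesis unfolding Dc_def proj_def using False by auto
  qed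
qed

lemma B_quad:
  "ip n v (fop n Bc v) = (\<Sum>j. complex_of_real (cf j) * ip n (proj n v) (Gp j (proj n v)))"
proof -
  let ?z = "proj n v"
  have z: "supp_in n ?z" unfolding supp_in_def proj_def by auto
  define f where "f j i l = cnj (v i) * v l * (complex_of_real (cf j) * Gp j (ev l) i)" for j i l
  have sf: "summable (\<lambda>j. f j i l)" if "i \<in> {1..n}" "l \<in> {1..n}" for i l
    unfolding f_def using Rm_summ[of i l] that by (intro summable_mult) auto
  have "ip n v (fop n Bc v) = (\<Sum>i=1..n. \<Sum>l=1..n. cnj (v i) * v l * Rm i l)"
    unfolding ip_def fop_def Bc_def by (intro sum.cong) (auto simp: sum_distrib_left mult_ac)
  also have "\<dots> = (\<Sum>i=1..n. \<Sum>l=1..n. \<Sum>j. f j i l)"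
    unfolding Rm_def f_def
    by (intro sum.cong refl suminf_mult[symmetric] Rm_summ) auto
  also have "\<dots> = (\<Sum>i=1..n. \<Sum>j. \<Sum>l=1..n. f j i l)"
    by (intro sum.cong refl suminf_sum[symmetric] sf) auto
  also have "\<dots> = (\<Sum>j. \<Sum>i=1..n. \<Sum>l=1..n. f j i l)"
    by (intro suminf_sum[symmetric] summable_sum sf) auto
  also have "\<dots> = (\<Sum>j. complex_of_real (cf j) * ip n ?z (Gp j ?z))"
  proof (rule arg_cong[where f=suminf], rule ext)
    fix j
    have "ip n ?z (Gp j ?z) = (\<Sum>i=1..n. cnj (v i) * (\<Sum>l=1..n. v l * Gp j (ev l) i))"
      unfolding ip_def
    proof (rule sum.cong[OF refl])
      fix i assume i: "i \<in> {1..n}"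
      have "Gp j ?z i = (\<Sum>l=1..n. ?z l * Gp j (ev l) i)"
        using fun_cong[OF Gp_expand[OF z, of j], of i] by simp
      also have "\<dots> = (\<Sum>l=1..n. v l * Gp j (ev l) i)"
        by (rule sum.cong) (auto simp: proj_def)
      finally show "cnj (?z i) * Gp j ?z i = cnj (v i) * (\<Sum>l=1..n. v l * Gp j (ev l) i)"
        using i by (simp add: proj_def)
    qed
    thus "(\<Sum>i=1..n. \<Sum>l=1..n. f j i l) = complex_of_real (cf j) * ip n ?z (Gp j ?z)"
      unfolding f_def by (simp add: sum_distrib_left mult_ac)
  qed
  finally show ?thesis .
qed

lemma B_pos: "\<exists>s. ip n v (fop n Bc v) = complex_of_real s \<and> 0 \<le> s"
proof -
  let ?z = "proj n v"
  have z: "supp_in n ?z" unfolding supp_in_def proj_def by auto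
  define r where "r j = Re (ip n ?z (Gp j ?z))" for j
  define Q where "Q = (nrm n ?z)^2"
  have rr: "ip n ?z (Gp j ?z) = complex_of_real (r j) \<and> 0 \<le> r j \<and> r j \<le> Q" for j
    using q_real_bound[OF z, of j] unfolding r_def Q_def by auto
  have r0: "r 0 = Q" unfolding r_def Q_def by (simp add: ip_self_nrm)
  have Q0: "0 \<le> Q" unfolding Q_def by simp
  have s1: "summable (\<lambda>j. cf j * r j)"
  proof (rule summable_comparison_test'[OF summable_mult2[OF cf_abs_summable, of Q]])
    fix j :: nat assume "j \<ge> 0"
    show "norm (cf j * r j) \<le> \<bar>cf j\<bar> * Q"
      using rr[of j] by (simp add: abs_mult mult_left_mono)
  qed
  have s2: "summable (\<lambda>j. cf j * Q)" by (rule summable_mult2[OF cf_summable])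
  have "ip n v (fop n Bc v) = (\<Sum>j. complex_of_real (cf j * r j))"
    unfolding B_quad using rr by simp
  also have "\<dots> = complex_of_real (\<Sum>j. cf j * r j)"
    by (rule suminf_of_real[OF s1, symmetric])
  finally have e: "ip n v (fop n Bc v) = complex_of_real (\<Sum>j. cf j * r j)" .
  have "(\<Sum>j. cf j * Q) \<le> (\<Sum>j. cf j * r j)"
  proof (rule suminf_le[OF _ s2 s1])
    fix j show "cf j * Q \<le> cf j * r j"
    proof (cases "j = 0")
      case True then show ?thesis using r0 by simp
    next
      case False
      hence "cf j \<le> 0" using cf_nonpos by simp
      thus ?thesis using rr[of j] by (simp add: mult_left_mono_neg)
    qed
  qed
  moreover have "(\<Sum>j. cf j * Q) = suminf cf * Q" by (rule suminf_mult2[OF cf_summable, symmetric])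
  moreover have "0 \<le> suminf cf * Q" using cf_suminf_nonneg Q0 by simp
  ultimately show ?thesis using e by auto
qed

lemma sqrt_exists: "\<exists>B. positive_op B \<and> (\<forall>v\<in>l2. B (B v) = Dc v)"
proof (intro exI conjI ballI)
  show "positive_op (fop n Bc)"
    unfolding positive_op_def
  proof (intro conjI ballI fop_bounded[OF Bc_good])
    fix v :: "nat \<Rightarrow> complex" assume "v \<in> l2"
    obtain s where s: "ip n v (fop n Bc v) = complex_of_real s" "0 \<le> s" using B_pos by blast
    have "l2_inner v (fop n Bc v) = complex_of_real s"
      using supp_in_inner1[OF fop_supp[OF Bc_good]] s(1) by simp
    thus "l2_inner v (fop n Bc v) \<in> \<real>" "0 \<le> Re (l2_inner v (fop n Bc v))"
      using s(2) by auto
  qed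
  fix v :: "nat \<Rightarrow> complex"
  show "fop n Bc (fop n Bc v) = Dc v" by (rule BB)
qed

end

lemma bop_l2: "bounded_op S \<Longrightarrow> v \<in> l2 \<Longrightarrow> S v \<in> l2"
  unfolding bounded_op_def by blast

lemma bop_lin: "bounded_op S \<Longrightarrow> u \<in> l2 \<Longrightarrow> v \<in> l2 \<Longrightarrow> S (\<lambda>m. a * u m + b * v m) = (\<lambda>m. a * S u m + b * S v m)"
  unfolding bounded_op_def by blast

lemma quad_expand:
  assumes S: "bounded_op S" and u: "u \<in> l2" and v: "v \<in> l2"
  shows "l2_inner (\<lambda>m. 1 * u m + c * v m) (S (\<lambda>m. 1 * u m + c * v m))
     = l2_inner u (S u) + c * l2_inner u (S v) + cnj c * l2_inner v (S u) + cnj c * c * l2_inner v (S v)"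
proof -
  have Su: "S u \<in> l2" and Sv: "S v \<in> l2" using bop_l2[OF S] u v by auto
  have w: "(\<lambda>m. 1 * S u m + c * S v m) \<in> l2" by (rule lin_l2[OF Su Sv])
  have "l2_inner (\<lambda>m. 1 * u m + c * v m) (S (\<lambda>m. 1 * u m + c * v m))
      = l2_inner (\<lambda>m. 1 * u m + c * v m) (\<lambda>m. 1 * S u m + c * S v m)"
    by (simp only: bop_lin[OF S u v, of 1 c])
  also have "\<dots> = cnj 1 * l2_inner u (\<lambda>m. 1 * S u m + c * S v m) + cnj c * l2_inner v (\<lambda>m. 1 * S u m + c * S v m)"
    by (rule inner_lin_left[OF w u v])
  also have "l2_inner u (\<lambda>m. 1 * S u m + c * S v m) = 1 * l2_inner u (S u) + c * l2_inner u (S v)"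
    by (rule inner_lin_right[OF u Su Sv])
  also have "l2_inner v (\<lambda>m. 1 * S u m + c * S v m) = 1 * l2_inner v (S u) + c * l2_inner v (S v)"
    by (rule inner_lin_right[OF v Su Sv])
  finally show ?thesis by (simp add: algebra_simps)
qed

lemma pos_selfadj:
  assumes P: "positive_op S" and u: "u \<in> l2" and v: "v \<in> l2"
  shows "l2_inner (S u) v = l2_inner u (S v)"
proof -
  have S: "bounded_op S" using P unfolding positive_op_def by simp
  have re: "Im (l2_inner w (S w)) = 0" if "w \<in> l2" for w
    using P that unfolding positive_op_def by (auto simp: complex_is_Real_iff)
  define a where "a = l2_inner u (S v)"
  define b where "b = l2_inner v (S u)"
  have w1: "(\<lambda>m. 1 * u m + 1 * v m) \<in> l2" by (rule lin_l2[OF u v])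
  have w2: "(\<lambda>m. 1 * u m + \<i> * v m) \<in> l2" by (rule lin_l2[OF u v])
  have "Im (l2_inner u (S u) + 1 * a + cnj 1 * b + cnj 1 * 1 * l2_inner v (S v)) = 0"
    using re[OF w1] quad_expand[OF S u v, of 1] unfolding a_def b_def by simp
  hence i1: "Im a + Im b = 0" using re[OF u] re[OF v] by simp
  have "Im (l2_inner u (S u) + \<i> * a + cnj \<i> * b + cnj \<i> * \<i> * l2_inner v (S v)) = 0"
    using re[OF w2] quad_expand[OF S u v, of "\<i>"] unfolding a_def b_def by simp
  hence i2: "Re a - Re b = 0" using re[OF u] re[OF v] by simp
  have ab: "a = cnj b" using i1 i2 by (simp add: complex_eq_iff)
  have "l2_inner (S u) v = cnj (l2_inner v (S u))" by (rule inner_cnj[OF bop_l2[OF S u] v])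
  also have "\<dots> = a" using ab b_def by simp
  finally show ?thesis unfolding a_def .
qed

lemma sum_1n: "(\<Sum>l=1..n. f l) = (\<Sum>l<n. f (Suc l))"
  by (induction n) (simp_all add: sum.cl_ivl_Suc)

lemma inj_imp_det:
  fixes col :: "nat \<Rightarrow> nat \<Rightarrow> complex"
  assumes inj: "\<And>c. (\<And>i. 1 \<le> i \<Longrightarrow> i \<le> n \<Longrightarrow> (\<Sum>l=1..n. c l * col l i) = 0) \<Longrightarrow> (\<And>l. 1 \<le> l \<Longrightarrow> l \<le> n \<Longrightarrow> c l = 0)"
  defines "A \<equiv> mat n n (\<lambda>(i, l). col (Suc l) (Suc i))"
  shows "det A \<noteq> 0"
proof
  assume "det A = 0"
  then obtain w where w: "w \<in> carrier_vec n" "w \<noteq> 0\<^sub>v n" "A *\<^sub>v w = 0\<^sub>v n"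
    using det_0_iff_vec_prod_zero[of A n] unfolding A_def by auto
  define c where "c l = (if 1 \<le> l \<and> l \<le> n then w $ (l - 1) else 0)" for l
  have "c l = 0" if l: "1 \<le> l" "l \<le> n" for l
  proof (rule inj[OF _ l])
    fix i assume i: "1 \<le> i" "i \<le> n"
    have "(A *\<^sub>v w) $ (i - 1) = 0" using w(3) i by simp
    hence "(\<Sum>l<n. col (Suc l) i * w $ l) = 0"
      using i w(1) unfolding A_def by (simp add: scalar_prod_def row_def atLeast0LessThan)
    moreover have "(\<Sum>l=1..n. c l * col l i) = (\<Sum>l<n. col (Suc l) i * w $ l)"
      unfolding sum_1n c_def by (intro sum.cong) auto
    ultimately show "(\<Sum>l=1..n. c l * col l i) = 0" by simp
  qed
  hence "w = 0\<^sub>v n"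
  proof (intro eq_vecI)
    fix j assume "j < dim_vec (0\<^sub>v n :: complex vec)"
    hence j: "j < n" by simp
    have "c (Suc j) = 0" using \<open>\<And>l. 1 \<le> l \<Longrightarrow> l \<le> n \<Longrightarrow> c l = 0\<close> j by simp
    thus "w $ j = 0\<^sub>v n $ j" unfolding c_def using j by simp
  qed (use w(1) in simp)
  thus False using w(2) by simp
qed

lemma inj_imp_surj:
  fixes col :: "nat \<Rightarrow> nat \<Rightarrow> complex"
  assumes inj: "\<And>c. (\<And>i. 1 \<le> i \<Longrightarrow> i \<le> n \<Longrightarrow> (\<Sum>l=1..n. c l * col l i) = 0) \<Longrightarrow> (\<And>l. 1 \<le> l \<Longrightarrow> l \<le> n \<Longrightarrow> c l = 0)"
  shows "\<exists>c. \<forall>i. 1 \<le> i \<and> i \<le> n \<longrightarrow> (\<Sum>l=1..n. c l * col l i) = y i"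
proof -
  define A where "A = mat n n (\<lambda>(i, l). col (Suc l) (Suc i))"
  have A: "A \<in> carrier_mat n n" unfolding A_def by simp
  have "det A \<noteq> 0" unfolding A_def by (rule inj_imp_det, rule inj) assumption+
  hence "A \<in> Units (ring_mat TYPE(complex) n ())" by (rule det_non_zero_imp_unit[OF A])
  then obtain B where B: "B \<in> carrier_mat n n" "A * B = 1\<^sub>m n"
    unfolding Units_def ring_mat_def by auto
  define yv where "yv = vec n (\<lambda>i. y (Suc i))"
  define w where "w = B *\<^sub>v yv"
  have wc: "w \<in> carrier_vec n" unfolding w_def using B(1) by (intro mult_mat_vec_carrier) (auto simp: yv_def)
  have Aw: "A *\<^sub>v w = yv"
    unfolding w_def using B A by (simp add: assoc_mult_mat_vec[symmetric] yv_def)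
  define c where "c l = (if 1 \<le> l \<and> l \<le> n then w $ (l - 1) else 0)" for l
  show ?thesis
  proof (intro exI allI impI)
    fix i assume i: "1 \<le> i \<and> i \<le> n"
    have ii: "i - 1 < n" "Suc (i - 1) = i" using i by auto
    have "(A *\<^sub>v w) $ (i - 1) = y i" using Aw ii unfolding yv_def by simp
    hence "(\<Sum>l<n. col (Suc l) i * w $ l) = y i"
      using i wc ii unfolding A_def by (simp add: scalar_prod_def row_def atLeast0LessThan)
    moreover have "(\<Sum>l=1..n. c l * col l i) = (\<Sum>l<n. col (Suc l) i * w $ l)"
      unfolding sum_1n c_def by (intro sum.cong) auto
    ultimately show "(\<Sum>l=1..n. c l * col l i) = y i" by simp
  qed
qed

lemma inj_imp_transp_inj:
  fixes col :: "nat \<Rightarrow> nat \<Rightarrow> complex"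
  assumes inj: "\<And>c. (\<And>i. 1 \<le> i \<Longrightarrow> i \<le> n \<Longrightarrow> (\<Sum>l=1..n. c l * col l i) = 0) \<Longrightarrow> (\<And>l. 1 \<le> l \<Longrightarrow> l \<le> n \<Longrightarrow> c l = 0)"
    and w: "\<And>l. 1 \<le> l \<Longrightarrow> l \<le> n \<Longrightarrow> (\<Sum>i=1..n. w i * col l i) = 0"
    and i: "1 \<le> i" "i \<le> n"
  shows "w i = 0"
proof -
  define A where "A = mat n n (\<lambda>(i, l). col (Suc l) (Suc i))"
  have A: "A \<in> carrier_mat n n" unfolding A_def by simp
  have "det A \<noteq> 0" unfolding A_def by (rule inj_imp_det, rule inj) assumption+
  hence d: "det (transpose_mat A) \<noteq> 0" using det_transpose[OF A] by simp
  define wv where "wv = vec n (\<lambda>i. w (Suc i))"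
  have "transpose_mat A *\<^sub>v wv = 0\<^sub>v n"
  proof (intro eq_vecI)
    fix l assume "l < dim_vec (0\<^sub>v n :: complex vec)"
    hence l: "l < n" by simp
    have "(\<Sum>j<n. col (Suc l) (Suc j) * w (Suc j)) = (\<Sum>i=1..n. w i * col (Suc l) i)"
      unfolding sum_1n by (simp add: mult.commute)
    also have "\<dots> = 0" using w[of "Suc l"] l by simp
    finally show "(transpose_mat A *\<^sub>v wv) $ l = 0\<^sub>v n $ l"
      using l unfolding A_def wv_def by (simp add: scalar_prod_def row_def col_def atLeast0LessThan)
  qed (simp add: A_def)
  moreover have wc: "wv \<in> carrier_vec n" unfolding wv_def by simp
  moreover have At: "transpose_mat A \<in> carrier_mat n n" using A by simp
  ultimately have "wv = 0\<^sub>v n"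
    using det_0_iff_vec_prod_zero[OF At] d by blast
  hence "wv $ (i - 1) = 0" using i by simp
  thus ?thesis using i unfolding wv_def by simp
qed

lemma nrm_le_l2: assumes v: "v \<in> l2" shows "nrm N v \<le> l2_norm v"
proof -
  have "(nrm N v)^2 = (\<Sum>m\<in>{1..N}. (cmod (v m))^2)" by (rule nrm_sq)
  also have "\<dots> \<le> (\<Sum>m. (cmod (v m))^2)"
    by (rule sum_le_suminf[OF l2_summable[OF v]]) auto
  finally have "(nrm N v)^2 \<le> (\<Sum>m. (cmod (v m))^2)" .
  thus ?thesis unfolding l2_norm_def by (rule real_le_rsqrt)
qed

lemma diff_l2: "u \<in> l2 \<Longrightarrow> v \<in> l2 \<Longrightarrow> (\<lambda>m. u m - v m) \<in> l2"
  using lin_l2[of u v 1 "-1"] by simp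

lemma inner_zero_left: "l2_inner (\<lambda>m. 0) v = 0"
  unfolding l2_inner_def by simp

lemma ip_diff: "ip N z (\<lambda>i. a i - b i) = ip N z a - ip N z b"
  unfolding ip_def by (simp add: right_diff_distrib sum_subtractf)

lemma has_dim_in_V:
  fixes z :: "nat \<Rightarrow> complex"
  assumes hd: "has_dim M n" and sub: "\<And>w. w \<in> M \<Longrightarrow> supp_in n w \<and> ip n z w = 0"
    and z: "supp_in n z"
  shows "z = (\<lambda>m. 0)"
proof -
  obtain b where M: "M = {(\<lambda>m. \<Sum>i<n. c i * b i m) | c. True}"
    and ind: "\<forall>c. (\<lambda>m. \<Sum>i<n. c i * b i m) = (\<lambda>m. 0) \<longrightarrow> (\<forall>i<n. c i = 0)"
    using hd unfolding has_dim_def by blast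
  have bM: "b j \<in> M" if j: "j < n" for j
  proof -
    have "(\<lambda>m. \<Sum>i<n. (if i = j then 1 else 0) * b i m) = b j"
      using j by (simp add: if_distrib[of "\<lambda>x. x * _"] sum.delta cong: if_cong)
    hence eq: "b j = (\<lambda>m. \<Sum>i<n. (if i = j then 1 else 0) * b i m)" by simp
    show ?thesis unfolding M mem_Collect_eq
      by (rule exI[of _ "\<lambda>i. if i = j then 1 else 0"]) (simp add: eq)
  qed
  have bs: "supp_in n (b j)" and bz: "ip n z (b j) = 0" if "j < n" for j
    using sub[OF bM[OF that]] by auto
  define col where "col l i = b (l - 1) i" for l i
  have inj: "c l = 0" if h: "\<And>i. 1 \<le> i \<Longrightarrow> i \<le> n \<Longrightarrow> (\<Sum>l=1..n. c l * col l i) = 0"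
    and l: "1 \<le> l" "l \<le> n" for c l
  proof -
    have "(\<lambda>m. \<Sum>i<n. c (Suc i) * b i m) = (\<lambda>m. 0)"
    proof
      fix m
      show "(\<Sum>i<n. c (Suc i) * b i m) = 0"
      proof (cases "1 \<le> m \<and> m \<le> n")
        case True
        have "(\<Sum>i<n. c (Suc i) * b i m) = (\<Sum>l=1..n. c l * col l m)"
          unfolding sum_1n col_def by simp
        also have "\<dots> = 0" using h True by simp
        finally show ?thesis .
      next
        case False
        have "b i m = 0" if "i < n" for i using supp_in_zero[OF bs[OF that], of m] False by auto
        thus ?thesis by simp
      qed
    qed
    hence "\<forall>i<n. c (Suc i) = 0" using spec[OF ind, of "\<lambda>i. c (Suc i)"] by simp
    moreover have "l - 1 < n" "Suc (l - 1) = l" using l by auto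
    ultimately show ?thesis by metis
  qed
  have "cnj (z i) = 0" if i: "1 \<le> i" "i \<le> n" for i
  proof (rule inj_imp_transp_inj[where n=n and col=col and w="\<lambda>i. cnj (z i)"])
    fix c l assume "\<And>i. 1 \<le> i \<Longrightarrow> i \<le> n \<Longrightarrow> (\<Sum>l=1..n. c l * col l i) = 0" "1 \<le> l" "l \<le> n"
    thus "c l = 0" by (rule inj)
  next
    fix l assume l: "1 \<le> l" "l \<le> n"
    show "(\<Sum>i=1..n. cnj (z i) * col l i) = 0"
      using bz[of "l - 1"] l unfolding col_def ip_def by simp
  next
    show "1 \<le> i" "i \<le> n" using i by auto
  qed
  hence zi: "z i = 0" if "1 \<le> i" "i \<le> n" for i using that by simp
  show ?thesis
  proof (intro ext)
    fix m
    show "z m = 0"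
    proof (cases "m \<in> {1..n}")
      case True then show ?thesis using \<open>\<And>i. 1 \<le> i \<Longrightarrow> i \<le> n \<Longrightarrow> z i = 0\<close> by simp
    next
      case False then show ?thesis by (rule supp_in_zero[OF z])
    qed
  qed
qed

context opctr begin

lemma Dc_supp: "supp_in n (Dc v)"
  using G_supp[of v] unfolding supp_in_def Dc_def proj_def by auto

lemma ip_Dc: "ip n z (Dc z) = complex_of_real ((nrm n z)^2 - (nrm (n + k) (fop n X z))^2)"
proof -
  have "ip n z (Dc z) = ip n z (proj n z) - ip n z (G z)"
    unfolding Dc_def by (rule ip_diff)
  also have "ip n z (proj n z) = ip n z z" by (rule ip_cong) (simp add: proj_def)
  also have "ip n z (G z) = ip (n + k) (fop n X z) (fop n X z)" by (rule ip_G)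
  finally show ?thesis by (simp add: ip_self_nrm)
qed

lemma strict_contr:
  assumes S: "positive_op S" and SS: "\<forall>v\<in>l2. S (S v) = Dc v"
    and hd: "has_dim (l2_closure (S ` l2)) n"
    and z: "supp_in n z" and eq: "nrm (n + k) (fop n X z) = nrm n z"
  shows "z = (\<lambda>m. 0)"
proof -
  have Sb: "bounded_op S" using S unfolding positive_op_def by simp
  have zl: "z \<in> l2" by (rule supp_in_l2[OF z])
  have kill: "S u = (\<lambda>m. 0)" if u: "u \<in> l2" "l2_inner u (Dc u) = 0" for u
  proof -
    have Su: "S u \<in> l2" by (rule bop_l2[OF Sb u(1)])
    have "l2_inner (S u) (S u) = l2_inner u (S (S u))" by (rule pos_selfadj[OF S u(1) Su])
    also have "\<dots> = 0" using SS u by simp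
    finally have "(l2_norm (S u))^2 = 0" using inner_self[OF Su] by simp
    thus ?thesis using l2_norm_zero[OF Su] by simp
  qed
  have orth: "l2_inner u (S v) = 0" if u: "u \<in> l2" "S u = (\<lambda>m. 0)" and v: "v \<in> l2" for u v
  proof -
    have "l2_inner u (S v) = l2_inner (S u) v" by (rule pos_selfadj[OF S u(1) v, symmetric])
    thus ?thesis using u(2) inner_zero_left by simp
  qed
  have Sz: "S z = (\<lambda>m. 0)"
  proof (rule kill[OF zl])
    show "l2_inner z (Dc z) = 0"
      unfolding supp_in_inner2[OF z] ip_Dc eq by simp
  qed
  have Sm: "S (ev m) = (\<lambda>m. 0)" if m: "n < m" for m
  proof (rule kill[OF ev_l2])
    show "1 \<le> m" using m by simp
    have "Dc (ev m) m = 0" using supp_in_zero[OF Dc_supp[of "ev m"], of m] m by simp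
    thus "l2_inner (ev m) (Dc (ev m)) = 0" using inner_ev[of m] m by simp
  qed
  have inV: "supp_in n w \<and> ip n z w = 0" if w: "w \<in> S ` l2" for w
  proof -
    obtain v where v: "v \<in> l2" "w = S v" using w by blast
    have wl: "w \<in> l2" using bop_l2[OF Sb v(1)] v(2) by simp
    have "w m = 0" if m: "n < m" for m
    proof -
      have "w m = l2_inner (ev m) w" using inner_ev[of m] m by simp
      also have "\<dots> = 0" using orth[OF ev_l2 Sm[OF m] v(1)] m v(2) by simp
      finally show ?thesis .
    qed
    hence "supp_in n w" using l2_zero0[OF wl] unfolding supp_in_def by auto
    moreover have "ip n z w = 0"
      using orth[OF zl Sz v(1)] supp_in_inner2[OF z] v(2) by simp
    ultimately show ?thesis by simp
  qed
  have inV2: "supp_in n w \<and> ip n z w = 0" if w: "w \<in> l2_closure (S ` l2)" for w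
  proof -
    have wl: "w \<in> l2" and close: "\<forall>e>0. \<exists>u\<in>S ` l2. l2_norm (\<lambda>m. w m - u m) < e"
      using w unfolding l2_closure_def by auto
    have small: "cmod (w m) < e \<and> cmod (ip n z w) \<le> nrm n z * e" if m: "n < m" "e > 0" for m e
    proof -
      obtain u where u: "u \<in> S ` l2" "l2_norm (\<lambda>m. w m - u m) < e" using close m(2) by blast
      have uV: "supp_in n u" "ip n z u = 0" using inV[OF u(1)] by auto
      have ul: "u \<in> l2" by (rule supp_in_l2[OF uV(1)])
      have dl: "(\<lambda>m. w m - u m) \<in> l2" by (rule diff_l2[OF wl ul])
      have "cmod (w m) = cmod (w m - u m)" using supp_in_zero[OF uV(1), of m] m by simp
      also have "\<dots> \<le> l2_norm (\<lambda>m. w m - u m)" by (rule comp_le_norm[OF dl])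
      finally have c1: "cmod (w m) < e" using u(2) by simp
      have "ip n z w = ip n z (\<lambda>m. w m - u m)" using ip_diff[of n z w u] uV(2) by simp
      hence "cmod (ip n z w) \<le> nrm n z * nrm n (\<lambda>m. w m - u m)" by (simp only: ip_CS)
      also have "\<dots> \<le> nrm n z * e"
        using nrm_le_l2[OF dl, of n] u(2) nrm_nonneg by (intro mult_left_mono) auto
      finally show ?thesis using c1 by simp
    qed
    have "w m = 0" if m: "n < m" for m
    proof (rule ccontr)
      assume "w m \<noteq> 0"
      hence "cmod (w m) > 0" by simp
      thus False using small[OF m, of "cmod (w m)"] by simp
    qed
    hence "supp_in n w" using l2_zero0[OF wl] unfolding supp_in_def by auto
    moreover have "ip n z w = 0"
    proof (rule ccontr)
      assume ne: "ip n z w \<noteq> 0"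
      define e where "e = cmod (ip n z w) / (2 * (nrm n z + 1))"
      have e0: "e > 0" unfolding e_def using ne nrm_nonneg[of n z] by (simp add: add_pos_nonneg)
      have "cmod (ip n z w) \<le> nrm n z * e" using small[of "Suc n" e] e0 by simp
      also have "\<dots> < cmod (ip n z w)"
      proof -
        have "nrm n z * e \<le> (nrm n z + 1) * e" using e0 by simp
        also have "\<dots> = cmod (ip n z w) / 2"
          unfolding e_def using nrm_nonneg[of n z] by (simp add: field_simps)
        also have "\<dots> < cmod (ip n z w)" using ne by simp
        finally show ?thesis .
      qed
      finally show False by simp
    qed
    ultimately show ?thesis by simp
  qed
  show ?thesis by (rule has_dim_in_V[OF hd inV2 z])
qed

end

lemma sq_le_prod2: fixes a b :: real
  assumes "a^2 \<le> a * b" "0 \<le> a" "0 \<le> b" shows "a \<le> b"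
proof (cases "a = 0")
  case True then show ?thesis using assms by simp
next
  case False
  hence "a > 0" using assms by simp
  thus ?thesis using assms(1) by (simp add: power2_eq_square)
qed

lemma fop_lincomb: "fop p a (\<lambda>m. \<Sum>j\<in>J. c j * w j m) = (\<lambda>m. \<Sum>j\<in>J. c j * fop p a (w j) m)"
proof (intro ext)
  fix m'
  have "fop p a (\<lambda>m. \<Sum>j\<in>J. c j * w j m) m' = (\<Sum>i=1..p. \<Sum>j\<in>J. c j * (w j i * a i m'))"
    unfolding fop_def by (simp add: sum_distrib_right mult.assoc)
  also have "\<dots> = (\<Sum>j\<in>J. \<Sum>i=1..p. c j * (w j i * a i m'))" by (rule sum.swap)
  also have "\<dots> = (\<Sum>j\<in>J. c j * fop p a (w j) m')" unfolding fop_def by (simp add: sum_distrib_left)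
  finally show "fop p a (\<lambda>m. \<Sum>j\<in>J. c j * w j m) m' = (\<Sum>j\<in>J. c j * fop p a (w j) m')" .
qed

lemma adj_transfer:
  assumes a: "good q a" and c: "\<And>z. supp_in p z \<Longrightarrow> nrm q (fop p a z) \<le> nrm p z"
  shows "nrm p (fadj p q a y) \<le> nrm q y"
proof -
  let ?w = "fadj p q a y"
  have w: "supp_in p ?w" by (rule fadj_supp)
  have "(nrm p ?w)^2 = cmod (ip p ?w ?w)" unfolding ip_self_nrm by (simp add: norm_power)
  also have "ip p ?w ?w = ip q (fop p a ?w) y" using ip_fop_fadj[OF a] by metis
  also have "cmod \<dots> \<le> nrm q (fop p a ?w) * nrm q y" by (rule ip_CS)
  also have "\<dots> \<le> nrm p ?w * nrm q y" by (rule mult_right_mono[OF c[OF w] nrm_nonneg])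
  finally show ?thesis using sq_le_prod2 nrm_nonneg by metis
qed

lemma adj_transfer_strict:
  assumes a: "good q a" and c: "\<And>z. supp_in p z \<Longrightarrow> z \<noteq> (\<lambda>m. 0) \<Longrightarrow> nrm q (fop p a z) < nrm p z"
    and eq: "nrm p (fadj p q a y) = nrm q y" and m: "1 \<le> m" "m \<le> q"
  shows "y m = 0"
proof (cases "fadj p q a y = (\<lambda>m. 0)")
  case True
  have "nrm p (fadj p q a y) = 0" unfolding True nrm_def L2_set_def by simp
  hence "nrm q y = 0" using eq by simp
  thus ?thesis using nrm_zero m by blast
next
  case False
  let ?w = "fadj p q a y"
  have w: "supp_in p ?w" by (rule fadj_supp)
  have pos: "0 < nrm p ?w"
  proof (rule ccontr)
    assume "\<not> 0 < nrm p ?w"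
    hence "nrm p ?w = 0" using nrm_nonneg[of p ?w] by simp
    hence "?w = (\<lambda>m. 0)" using nrm_zero supp_in_zero[OF w] by (metis atLeastAtMost_iff ext)
    thus False using False by simp
  qed
  have "(nrm p ?w)^2 = cmod (ip p ?w ?w)" unfolding ip_self_nrm by (simp add: norm_power)
  also have "ip p ?w ?w = ip q (fop p a ?w) y" using ip_fop_fadj[OF a] by metis
  also have "cmod \<dots> \<le> nrm q (fop p a ?w) * nrm q y" by (rule ip_CS)
  also have "\<dots> < nrm p ?w * nrm q y"
    using c[OF w False] eq pos by (intro mult_strict_right_mono) auto
  finally have "nrm p ?w * nrm p ?w < nrm p ?w * nrm p ?w" using eq by (simp add: power2_eq_square)
  thus ?thesis by simp
qed

locale opfull = opctr +
  fixes S :: "(nat \<Rightarrow> complex) \<Rightarrow> nat \<Rightarrow> complex"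
  assumes S_pos: "positive_op S" and SS: "\<forall>v\<in>l2. S (S v) = Dc v"
    and hd: "has_dim (l2_closure (S ` l2)) n"
begin

lemma strict: "supp_in n z \<Longrightarrow> z \<noteq> (\<lambda>m. 0) \<Longrightarrow> nrm (n + k) (fop n X z) < nrm n z"
  using strict_contr[OF S_pos SS hd] ctr by (meson order.not_eq_order_implies_strict)

definition Dm :: "nat \<Rightarrow> nat \<Rightarrow> complex" where
  "Dm l i = (if 1 \<le> i \<and> i \<le> n then ev l i - Gm l i else 0)"

lemma Dm_good: "good n Dm" unfolding good_def Dm_def by auto

lemma Dc_fop: "Dc = fop n Dm"
proof (intro ext)
  fix v i
  show "Dc v i = fop n Dm v i"
  proof (cases "1 \<le> i \<and> i \<le> n")
    case True
    have "(\<Sum>l=1..n. v l * ev l i) = v i"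
    proof -
      have "(\<Sum>l=1..n. v l * ev l i) = (\<Sum>l\<in>{1..n}. if l = i then v l else 0)"
        unfolding ev_def by (rule sum.cong) auto
      thus ?thesis using True by (simp add: sum.delta')
    qed
    moreover have "fop n Dm v i = (\<Sum>l=1..n. v l * ev l i) - fop n Gm v i"
      unfolding fop_def Dm_def using True by (simp add: right_diff_distrib sum_subtractf)
    ultimately show ?thesis unfolding Dc_def proj_def G_fop using True by simp
  next
    case False
    have "G v i = 0" using supp_in_zero[OF G_supp[of v], of i] False by auto
    thus ?thesis unfolding Dc_def proj_def fop_def Dm_def using False by auto
  qed
qed

lemma Dc_inj: assumes z: "supp_in n z" and d: "\<And>i. 1 \<le> i \<Longrightarrow> i \<le> n \<Longrightarrow> Dc z i = 0"
  shows "z = (\<lambda>m. 0)"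
proof (rule ccontr)
  assume ne: "z \<noteq> (\<lambda>m. 0)"
  have "ip n z (Dc z) = 0" unfolding ip_def using d by simp
  hence "(nrm n z)^2 - (nrm (n + k) (fop n X z))^2 = 0" unfolding ip_Dc by (metis of_real_eq_0_iff)
  hence "nrm (n + k) (fop n X z) = nrm n z" using nrm_nonneg by (simp add: power2_eq_iff_nonneg)
  thus False using strict[OF z ne] by simp
qed

lemma Dc_surj: "\<exists>c. \<forall>i. 1 \<le> i \<and> i \<le> n \<longrightarrow> (\<Sum>l=1..n. c l * Dm l i) = y i"
proof (rule inj_imp_surj)
  fix c l assume h: "\<And>i. 1 \<le> i \<Longrightarrow> i \<le> n \<Longrightarrow> (\<Sum>l=1..n. c l * Dm l i) = 0" and l: "1 \<le> l" "l \<le> n"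
  define z where "z i = (if 1 \<le> i \<and> i \<le> n then c i else 0)" for i
  have zs: "supp_in n z" unfolding supp_in_def z_def by auto
  have "Dc z i = 0" if i: "1 \<le> i" "i \<le> n" for i
  proof -
    have "Dc z i = (\<Sum>l=1..n. c l * Dm l i)" unfolding Dc_fop fop_def z_def by (rule sum.cong) auto
    thus ?thesis using h i by simp
  qed
  hence "z = (\<lambda>m. 0)" by (rule Dc_inj[OF zs])
  hence "z l = 0" by simp
  thus "c l = 0" using l unfolding z_def by simp
qed

lemma Dc_sol: "\<exists>u. supp_in n u \<and> (\<forall>i. 1 \<le> i \<and> i \<le> n \<longrightarrow> Dc u i = y i)"
proof -
  obtain c where c: "\<forall>i. 1 \<le> i \<and> i \<le> n \<longrightarrow> (\<Sum>l=1..n. c l * Dm l i) = y i" using Dc_surj by blast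
  define u where "u i = (if 1 \<le> i \<and> i \<le> n then c i else 0)" for i
  have "supp_in n u" unfolding supp_in_def u_def by auto
  moreover have "Dc u i = y i" if i: "1 \<le> i \<and> i \<le> n" for i
  proof -
    have "Dc u i = (\<Sum>l=1..n. c l * Dm l i)" unfolding Dc_fop fop_def u_def by (rule sum.cong) auto
    thus ?thesis using c i by simp
  qed
  ultimately show ?thesis by blast
qed

lemma S_bound: assumes s: "s \<in> l2" shows "(l2_norm (S s))^2 \<le> (l2_norm s)^2"
proof -
  have Sb: "bounded_op S" using S_pos unfolding positive_op_def by simp
  have Ss: "S s \<in> l2" by (rule bop_l2[OF Sb s])
  have "complex_of_real ((l2_norm (S s))^2) = l2_inner (S s) (S s)" by (rule inner_self[OF Ss, symmetric])
  also have "\<dots> = l2_inner s (S (S s))" by (rule pos_selfadj[OF S_pos s Ss])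
  also have "\<dots> = l2_inner s (Dc s)" using SS s by simp
  also have "\<dots> = ip n s (Dc s)" by (rule supp_in_inner1[OF Dc_supp])
  also have "\<dots> = complex_of_real ((nrm n s)^2 - (nrm (n + k) (fop n X s))^2)" by (rule ip_Dc)
  finally have "(l2_norm (S s))^2 = (nrm n s)^2 - (nrm (n + k) (fop n X s))^2" by (metis of_real_eq_iff)
  also have "\<dots> \<le> (nrm n s)^2" by simp
  also have "\<dots> \<le> (l2_norm s)^2" by (rule power_mono[OF nrm_le_l2[OF s] nrm_nonneg])
  finally show ?thesis .
qed

lemma Dc_quad: assumes z: "supp_in n z"
  shows "(nrm n (Dc z))^2 \<le> (nrm n z)^2 - (nrm (n + k) (fop n X z))^2"
proof -
  have Sb: "bounded_op S" using S_pos unfolding positive_op_def by simp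
  have zl: "z \<in> l2" by (rule supp_in_l2[OF z])
  have Sz: "S z \<in> l2" by (rule bop_l2[OF Sb zl])
  have "complex_of_real ((l2_norm (S z))^2) = l2_inner (S z) (S z)" by (rule inner_self[OF Sz, symmetric])
  also have "\<dots> = l2_inner z (S (S z))" by (rule pos_selfadj[OF S_pos zl Sz])
  also have "\<dots> = l2_inner z (Dc z)" using SS zl by simp
  also have "\<dots> = ip n z (Dc z)" by (rule supp_in_inner1[OF Dc_supp])
  also have "\<dots> = complex_of_real ((nrm n z)^2 - (nrm (n + k) (fop n X z))^2)" by (rule ip_Dc)
  finally have e: "(l2_norm (S z))^2 = (nrm n z)^2 - (nrm (n + k) (fop n X z))^2" by (metis of_real_eq_iff)
  have "(nrm n (Dc z))^2 = (l2_norm (S (S z)))^2" using SS zl supp_in_norm[OF Dc_supp, of z] by simp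
  also have "\<dots> \<le> (l2_norm (S z))^2" by (rule S_bound[OF Sz])
  finally show ?thesis using e by simp
qed

lemma uniform: "\<exists>K>0. \<forall>z. supp_in n z \<longrightarrow> nrm n z \<le> K * nrm n (Dc z)"
proof -
  have "\<forall>j. \<exists>u. supp_in n u \<and> (\<forall>i. 1 \<le> i \<and> i \<le> n \<longrightarrow> Dc u i = ev j i)" using Dc_sol by blast
  then obtain u where u: "\<And>j. supp_in n (u j)" "\<And>j i. 1 \<le> i \<and> i \<le> n \<Longrightarrow> Dc (u j) i = ev j i"
    by metis
  define K where "K = (\<Sum>i=1..n. \<Sum>j=1..n. cmod (u j i)) + 1"
  have K0: "K > 0" unfolding K_def by (simp add: sum_nonneg add_nonneg_pos)
  have "nrm n z \<le> K * nrm n (Dc z)" if z: "supp_in n z" for z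
  proof -
    define w where "w i = (\<Sum>j=1..n. Dc z j * u j i)" for i
    have ws: "supp_in n w" using u(1) unfolding supp_in_def w_def by simp
    have Dw: "Dc w i = Dc z i" if i: "1 \<le> i" "i \<le> n" for i
    proof -
      have "Dc w i = (\<Sum>j=1..n. Dc z j * Dc (u j) i)"
        unfolding w_def Dc_fop fop_lincomb by simp
      also have "\<dots> = (\<Sum>j=1..n. Dc z j * ev j i)"
        by (rule sum.cong) (use u(2) i in auto)
      also have "\<dots> = (\<Sum>j\<in>{1..n}. if j = i then Dc z j else 0)"
        unfolding ev_def by (rule sum.cong) auto
      also have "\<dots> = Dc z i" using i by (simp add: sum.delta')
      finally show ?thesis .
    qed
    have dz: "supp_in n (\<lambda>m. z m - w m)" using z ws unfolding supp_in_def by simp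
    have "Dc (\<lambda>m. z m - w m) i = 0" if i: "1 \<le> i" "i \<le> n" for i
    proof -
      have "Dc (\<lambda>m. 1 * z m + (-1) * w m) i = 1 * Dc z i + (-1) * Dc w i"
        unfolding Dc_fop fop_lin by simp
      thus ?thesis using Dw[OF i] by simp
    qed
    hence zw0: "(\<lambda>m. z m - w m) = (\<lambda>m. 0)" by (rule Dc_inj[OF dz])
    have zw: "z i = w i" for i using fun_cong[OF zw0, of i] by simp
    have ci: "cmod (z i) \<le> nrm n (Dc z) * (\<Sum>j=1..n. cmod (u j i))" for i
    proof -
      have zi: "z i = (\<Sum>j=1..n. Dc z j * u j i)" using zw[of i] unfolding w_def .
      have "cmod (z i) \<le> (\<Sum>j=1..n. cmod (Dc z j * u j i))" unfolding zi by (rule norm_sum)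
      also have "\<dots> \<le> (\<Sum>j=1..n. nrm n (Dc z) * cmod (u j i))"
      proof (rule sum_mono)
        fix j assume j: "j \<in> {1..n}"
        have "cmod (Dc z j) \<le> nrm n (Dc z)" using j by (intro comp_le_nrm) auto
        thus "cmod (Dc z j * u j i) \<le> nrm n (Dc z) * cmod (u j i)"
          by (simp add: norm_mult mult_right_mono)
      qed
      finally show ?thesis by (simp add: sum_distrib_left)
    qed
    have "nrm n z \<le> (\<Sum>i=1..n. cmod (z i))" unfolding nrm_def by (rule L2_set_le_sum) simp
    also have "\<dots> \<le> (\<Sum>i=1..n. nrm n (Dc z) * (\<Sum>j=1..n. cmod (u j i)))" by (rule sum_mono[OF ci])
    also have "\<dots> = nrm n (Dc z) * (K - 1)" unfolding K_def by (simp add: sum_distrib_left)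
    also have "\<dots> \<le> K * nrm n (Dc z)" using nrm_nonneg[of n "Dc z"] by (simp add: algebra_simps)
    finally show ?thesis .
  qed
  thus ?thesis using K0 by blast
qed

lemma uniform_F: "\<exists>mu>0. mu \<le> 1 \<and> (\<forall>z. supp_in n z \<longrightarrow> (nrm (n + k) (fop n X z))^2 \<le> (1 - mu) * (nrm n z)^2)"
proof -
  obtain K where K: "K > 0" "\<And>z. supp_in n z \<Longrightarrow> nrm n z \<le> K * nrm n (Dc z)" using uniform by blast
  define mu where "mu = 1 / (K^2 + 1)"
  have Kp: "K^2 + 1 > 0" by (rule add_nonneg_pos) simp_all
  have mu: "mu > 0" "mu \<le> 1" unfolding mu_def using Kp by (auto simp: field_simps)
  have "(nrm (n + k) (fop n X z))^2 \<le> (1 - mu) * (nrm n z)^2" if z: "supp_in n z" for z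
  proof -
    have "(nrm n z)^2 \<le> (K * nrm n (Dc z))^2" by (rule power_mono[OF K(2)[OF z] nrm_nonneg])
    also have "\<dots> = K^2 * (nrm n (Dc z))^2" by (simp add: power_mult_distrib)
    also have "\<dots> \<le> K^2 * ((nrm n z)^2 - (nrm (n + k) (fop n X z))^2)"
      by (rule mult_left_mono[OF Dc_quad[OF z]]) simp
    finally have h: "(nrm n z)^2 \<le> K^2 * ((nrm n z)^2 - (nrm (n + k) (fop n X z))^2)" .
    have c2: "(nrm (n + k) (fop n X z))^2 \<le> (nrm n z)^2" by (rule power_mono[OF ctr[OF z] nrm_nonneg])
    have "(K^2 + 1) * (nrm (n + k) (fop n X z))^2 \<le> K^2 * (nrm n z)^2"
      using h c2 by (simp add: algebra_simps)
    hence "(nrm (n + k) (fop n X z))^2 \<le> K^2 / (K^2 + 1) * (nrm n z)^2"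
      by (simp add: field_simps add_pos_nonneg)
    moreover have "K^2 / (K^2 + 1) = 1 - mu"
    proof -
      have "K^2 / (K^2 + 1) + mu = (K^2 + 1) / (K^2 + 1)"
        unfolding mu_def by (simp only: add_divide_distrib)
      also have "\<dots> = 1" using Kp by simp
      finally show ?thesis by simp
    qed
    ultimately show ?thesis by simp
  qed
  thus ?thesis using mu by blast
qed

end

lemma shift_shift: "shift a (shift b y) = shift (a + b) y"
  unfolding shift_def by (auto intro!: ext simp: diff_diff_add)

lemma shift_pow: "1 \<le> j \<Longrightarrow> (shift k ^^ j) y = shift (k * j) y"
proof (induction j rule: dec_induct)
  case base then show ?case by simp
next
  case (step j) then show ?case by (simp add: shift_shift)
qed

lemma shift_add: "shift a (\<lambda>m. f m + g m) = (\<lambda>m. shift a f m + shift a g m)"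
  unfolding shift_def by (auto intro!: ext)

lemma shift_sum: "shift a (\<lambda>m. \<Sum>j\<in>J. w j m) = (\<lambda>m. \<Sum>j\<in>J. shift a (w j) m)"
  unfolding shift_def by (auto intro!: ext)

lemma shift_lincomb: "shift a (\<lambda>m. \<Sum>j\<in>J. c j * w j m) = (\<lambda>m. \<Sum>j\<in>J. c j * shift a (w j) m)"
  unfolding shift_def by (auto intro!: ext)

context opset begin

definition Qp :: "(nat \<Rightarrow> complex) \<Rightarrow> nat \<Rightarrow> complex" where
  "Qp w = (\<lambda>m. w m - proj n w m)"

lemma Qp_zero: "1 \<le> i \<Longrightarrow> i \<le> n \<Longrightarrow> Qp w i = 0"
  unfolding Qp_def proj_def by simp

lemma T_decomp: "Top n k x w = (\<lambda>m. shift k (Qp w) m + fop n X w m)"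
proof -
  have "tail w = shift k (Qp w)" unfolding tail_def shift_def Qp_def proj_def by (auto intro!: ext)
  thus ?thesis unfolding Top_eq by simp
qed

definition Pw :: "(nat \<Rightarrow> complex) \<Rightarrow> nat \<Rightarrow> nat \<Rightarrow> complex" where
  "Pw v r = (fop n X ^^ r) v"

lemma Fr_formula: "Frop n k x r v = (\<lambda>m. Pw v r m + (\<Sum>j\<in>{1..r-1}. shift (k * j) (Qp (Pw v (r - j))) m))"
  unfolding Frop_def F1_eq Pw_def Qp_def by (intro ext) (simp add: shift_pow)

lemma W_zero: "1 \<le> j \<Longrightarrow> 1 \<le> i \<Longrightarrow> i \<le> n \<Longrightarrow> shift (k * j) (Qp y) i = 0"
  unfolding shift_def using Qp_zero[of "i - k * j" y] by auto

lemma Fr_step: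
  assumes r: "1 \<le> r"
  shows "Frop n k x (Suc r) v = Top n k x (Frop n k x r v)"
proof -
  obtain r' where r': "r = Suc r'" using r by (cases r) auto
  define W where "W j = shift (k * j) (Qp (Pw v (r - j)))" for j
  define R where "R = Frop n k x r v"
  have R: "R = (\<lambda>m. Pw v r m + (\<Sum>j\<in>{1..r-1}. W j m))" unfolding R_def Fr_formula W_def ..
  have Wz: "W j i = 0" if "j \<in> {1..r-1}" "1 \<le> i" "i \<le> n" for j i
    unfolding W_def using W_zero that by auto
  have F: "fop n X R = Pw v (Suc r)"
  proof -
    have "fop n X R = fop n X (Pw v r)"
      by (rule fop_local) (simp add: R Wz)
    thus ?thesis unfolding Pw_def by simp
  qed
  have Q: "Qp R = (\<lambda>m. Qp (Pw v r) m + (\<Sum>j\<in>{1..r-1}. W j m))"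
  proof (intro ext)
    fix m
    show "Qp R m = Qp (Pw v r) m + (\<Sum>j\<in>{1..r-1}. W j m)"
    proof (cases "1 \<le> m \<and> m \<le> n")
      case True then show ?thesis using Qp_zero[of m] Wz by simp
    next
      case False then show ?thesis unfolding Qp_def proj_def R by auto
    qed
  qed
  have SQ: "shift k (Qp R) = (\<lambda>m. shift k (Qp (Pw v r)) m + (\<Sum>j\<in>{1..r-1}. shift (k * Suc j) (Qp (Pw v (r - j))) m))"
    unfolding Q shift_add shift_sum W_def shift_shift by (simp add: algebra_simps)
  have "Top n k x R = (\<lambda>m. Pw v (Suc r) m + (shift k (Qp (Pw v r)) m + (\<Sum>j\<in>{1..r-1}. shift (k * Suc j) (Qp (Pw v (r - j))) m)))"
    unfolding T_decomp SQ F by (simp add: algebra_simps)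
  also have "\<dots> = Frop n k x (Suc r) v"
  proof -
    have "(\<Sum>j\<in>{1..Suc r - 1}. shift (k * j) (Qp (Pw v (Suc r - j))) m)
        = shift k (Qp (Pw v r)) m + (\<Sum>j\<in>{1..r-1}. shift (k * Suc j) (Qp (Pw v (r - j))) m)" for m
    proof -
      have "{1..Suc r - 1} = insert 1 {Suc 1..Suc r'}" using r' by auto
      hence "(\<Sum>j\<in>{1..Suc r - 1}. shift (k * j) (Qp (Pw v (Suc r - j))) m)
          = shift (k * 1) (Qp (Pw v (Suc r - 1))) m + (\<Sum>j\<in>{Suc 1..Suc r'}. shift (k * j) (Qp (Pw v (Suc r - j))) m)"
        by simp
      also have "(\<Sum>j\<in>{Suc 1..Suc r'}. shift (k * j) (Qp (Pw v (Suc r - j))) m)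
          = (\<Sum>j\<in>{1..r'}. shift (k * Suc j) (Qp (Pw v (Suc r - Suc j))) m)"
        by (rule sum.shift_bounds_cl_Suc_ivl)
      finally show ?thesis using r' by simp
    qed
    thus ?thesis unfolding Fr_formula[of "Suc r"] by simp
  qed
  finally show ?thesis unfolding R_def ..
qed

lemma Fr_T: "1 \<le> r \<Longrightarrow> Frop n k x r v = (Top n k x ^^ r) (proj n v)"
proof (induction r rule: dec_induct)
  case base
  have "Qp (proj n v) = (\<lambda>m. 0)" unfolding Qp_def proj_def by (auto intro!: ext)
  moreover have "fop n X (proj n v) = fop n X v" by (rule fop_local) (simp add: proj_def)
  moreover have "shift k (\<lambda>m. 0) = (\<lambda>m. 0)" unfolding shift_def by simp
  ultimately show ?case unfolding Fr_formula T_decomp Pw_def by simp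
next
  case (step r)
  then show ?case using Fr_step by simp
qed

definition Fc :: "nat \<Rightarrow> nat \<Rightarrow> complex" where
  "Fc i m = (if 1 \<le> m \<and> m \<le> n + k then x i m - (if m = i + k then 1 else 0) else 0)"

lemma Fop_fop: "Fop n k x = fop n Fc"
  unfolding Fop_def fop_def Fc_def by (intro ext) simp

lemma T_lincomb: "Top n k x (\<lambda>m. \<Sum>j\<in>J. c j * w j m) = (\<lambda>m. \<Sum>j\<in>J. c j * Top n k x (w j) m)"
  unfolding Top_def Fop_fop shift_lincomb fop_lincomb by (simp add: sum.distrib algebra_simps)

lemma Tp_lincomb: "(Top n k x ^^ r) (\<lambda>m. \<Sum>j\<in>J. c j * w j m) = (\<lambda>m. \<Sum>j\<in>J. c j * (Top n k x ^^ r) (w j) m)"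
  by (induction r) (simp_all add: T_lincomb)

lemma T_supp: "supp_in N w \<Longrightarrow> n \<le> N \<Longrightarrow> supp_in (N + k) (Top n k x w)"
  unfolding supp_in_def Top_def shift_def Fop_def by auto

lemma Tp_supp: "1 \<le> l \<Longrightarrow> l \<le> n \<Longrightarrow> supp_in (n + k * r) ((Top n k x ^^ r) (ev l))"
proof (induction r)
  case 0 then show ?case using supp_in_mono[OF ev_supp[of l], of n] by simp
next
  case (Suc r)
  have "supp_in (n + k * r + k) (Top n k x ((Top n k x ^^ r) (ev l)))"
    by (rule T_supp) (use Suc in auto)
  thus ?case by (simp add: algebra_simps)
qed

definition ar :: "nat \<Rightarrow> nat \<Rightarrow> nat \<Rightarrow> complex" where
  "ar r l = (if 1 \<le> l \<and> l \<le> n then (Top n k x ^^ r) (ev l) else (\<lambda>m. 0))"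

lemma ar_good: "good (n + k * r) (ar r)"
  unfolding good_def ar_def using Tp_supp unfolding supp_in_def by auto

lemma Tp_fop: "(Top n k x ^^ r) (proj n v) = fop n (ar r) v"
proof -
  have ps: "supp_in n (proj n v)" unfolding supp_in_def proj_def by auto
  have "proj n v = (\<lambda>m. \<Sum>l\<in>{1..n}. v l * ev l m)"
  proof -
    have "proj n v = (\<lambda>i. \<Sum>p=1..n. proj n v p * ev p i)" by (rule supp_expand[OF ps])
    also have "\<dots> = (\<lambda>m. \<Sum>l\<in>{1..n}. v l * ev l m)"
      by (intro ext sum.cong) (auto simp: proj_def)
    finally show ?thesis .
  qed
  hence "(Top n k x ^^ r) (proj n v) = (\<lambda>m. \<Sum>l\<in>{1..n}. v l * (Top n k x ^^ r) (ev l) m)"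
    by (simp add: Tp_lincomb)
  also have "\<dots> = fop n (ar r) v"
    unfolding fop_def ar_def by (intro ext sum.cong) auto
  finally show ?thesis .
qed

lemma Fr_fop: "1 \<le> r \<Longrightarrow> Frop n k x r = fop n (ar r)"
  using Fr_T Tp_fop by (intro ext) simp

end

lemma adj_transfer_mu:
  assumes a: "good q a" and c0: "0 \<le> c"
    and c: "\<And>z. supp_in p z \<Longrightarrow> (nrm q (fop p a z))^2 \<le> c * (nrm p z)^2"
  shows "(nrm p (fadj p q a y))^2 \<le> c * (nrm q y)^2"
proof -
  let ?w = "fadj p q a y"
  let ?W = "nrm p ?w" and ?Y = "nrm q y" and ?V = "nrm q (fop p a ?w)"
  have w: "supp_in p ?w" by (rule fadj_supp)
  have "?W^2 = cmod (ip p ?w ?w)" unfolding ip_self_nrm by (simp add: norm_power)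
  also have "ip p ?w ?w = ip q (fop p a ?w) y" using ip_fop_fadj[OF a] by metis
  also have "cmod \<dots> \<le> ?V * ?Y" by (rule ip_CS)
  finally have h: "?W^2 \<le> ?V * ?Y" .
  have "(?W^2)^2 \<le> (?V * ?Y)^2" by (rule power_mono[OF h]) simp
  also have "\<dots> = ?V^2 * ?Y^2" by (simp add: power_mult_distrib)
  also have "\<dots> \<le> (c * ?W^2) * ?Y^2" by (rule mult_right_mono[OF c[OF w]]) simp
  finally have h2: "?W^2 * ?W^2 \<le> ?W^2 * (c * ?Y^2)" by (simp add: power2_eq_square mult_ac)
  show ?thesis
  proof (cases "?W = 0")
    case True then show ?thesis using c0 by simp
  next
    case False
    hence pos: "?W^2 > 0" by simp
    show ?thesis using h2 mult_le_cancel_left_pos[OF pos] by blast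
  qed
qed

lemma nrm_mono: assumes "N \<le> M" shows "nrm N v \<le> nrm M v"
proof -
  have "(nrm N v)^2 \<le> (nrm M v)^2"
    unfolding nrm_sq by (rule sum_mono2) (use assms in auto)
  thus ?thesis by (rule power2_le_imp_le) (rule nrm_nonneg)
qed

lemma proj_supp: "supp_in N (proj N v)" unfolding supp_in_def proj_def by auto

lemma nrm_proj: "nrm N (proj N v) = nrm N v" by (rule nrm_cong) (simp add: proj_def)

lemma norm_proj: "l2_norm (proj N v) = nrm N v"
  using supp_in_norm[OF proj_supp] nrm_proj by simp

context opfull begin

lemma has_dim_Dc: "has_dim (Dc ` l2) n"
  unfolding has_dim_def
proof (intro exI conjI allI impI)
  show "Dc ` l2 = {(\<lambda>m. \<Sum>i<n. c i * ev (Suc i) m) | c. True}"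
  proof (intro equalityI subsetI)
    fix y assume "y \<in> Dc ` l2"
    then obtain v where v: "y = Dc v" by blast
    have "y = (\<lambda>i. \<Sum>p=1..n. y p * ev p i)" using supp_expand[OF Dc_supp[of v]] v by simp
    also have "\<dots> = (\<lambda>m. \<Sum>i<n. y (Suc i) * ev (Suc i) m)" by (simp only: sum_1n)
    finally have yy: "y = (\<lambda>m. \<Sum>i<n. y (Suc i) * ev (Suc i) m)" .
    show "y \<in> {(\<lambda>m. \<Sum>i<n. c i * ev (Suc i) m) | c. True}"
      unfolding mem_Collect_eq
    proof (rule exI[of _ "\<lambda>i. y (Suc i)"])
      show "y = (\<lambda>m. \<Sum>i<n. y (Suc i) * ev (Suc i) m) \<and> True" using yy by blast
    qed
  next
    fix y assume "y \<in> {(\<lambda>m. \<Sum>i<n. c i * ev (Suc i) m) | c. True}"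
    then obtain c where y: "y = (\<lambda>m. \<Sum>i<n. c i * ev (Suc i) m)" by blast
    obtain u where u: "supp_in n u" "\<And>i. 1 \<le> i \<and> i \<le> n \<Longrightarrow> Dc u i = y i"
      using Dc_sol[of y] by blast
    have "Dc u = y"
    proof (intro ext)
      fix i
      show "Dc u i = y i"
      proof (cases "1 \<le> i \<and> i \<le> n")
        case True then show ?thesis using u(2) by simp
      next
        case False
        have "Dc u i = 0" using supp_in_zero[OF Dc_supp[of u], of i] False by auto
        moreover have "y i = 0" unfolding y ev_def using False by (auto intro!: sum.neutral)
        ultimately show ?thesis by simp
      qed
    qed
    thus "y \<in> Dc ` l2" using supp_in_l2[OF u(1)] by blast
  qed
next
  fix c :: "nat \<Rightarrow> complex" and i :: nat
  assume h: "(\<lambda>m. \<Sum>i<n. c i * ev (Suc i) m) = (\<lambda>m. 0)" and i: "i < n"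
  have "(\<Sum>j<n. c j * ev (Suc j) (Suc i)) = 0" using fun_cong[OF h, of "Suc i"] by simp
  moreover have "(\<Sum>j<n. c j * ev (Suc j) (Suc i)) = c i"
  proof -
    have "(\<Sum>j<n. c j * ev (Suc j) (Suc i)) = (\<Sum>j\<in>{..<n}. if j = i then c j else 0)"
      unfolding ev_def by (rule sum.cong) auto
    thus ?thesis using i by (simp add: sum.delta')
  qed
  ultimately show "c i = 0" by simp
qed

end

theorem proposition3p1:
  fixes n k :: nat and x :: "nat \<Rightarrow> nat \<Rightarrow> complex"
  defines "T \<equiv> Top n k x"
      and "F1 \<equiv> F1op n k x"
      and "Fr \<equiv> Frop n k x"
  assumes k: "1 \<le> k"
    and contr: "is_contraction T"
    and cnu: "cnu T"
    and finT: "has_dim (defect_space T) n"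
    and finTs: "\<exists>d. has_dim (defect_space (op_adj T)) d"
    and incl: "defect_space T \<subseteq> defect_space (op_adj T)"
    and dimdiff: "has_dim (orth_diff (defect_space (op_adj T)) (defect_space T)) k"
  shows "(has_dim ((\<lambda>v m. proj n v m - op_adj F1 (F1 v) m) ` l2) n)
    \<and> (\<forall>v\<in>l2. F1 (\<lambda>m. v m - proj n v m) = (\<lambda>m. 0)
                \<and> (\<lambda>m. F1 v m - proj (n + k) (F1 v) m) = (\<lambda>m. 0))
    \<and> (\<exists>lam\<ge>0. \<forall>v\<in>l2. lam * (l2_norm (op_adj F1 v))^2 - (l2_norm (F1 v))^2
                      \<le> lam * (l2_norm (proj (n + k) v))^2 - (l2_norm (proj n v))^2)
    \<and> (\<forall>r\<ge>1. \<forall>v\<in>l2. l2_norm (Fr r v) \<le> l2_norm (proj n v)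
                   \<and> l2_norm (op_adj (Fr r) v) \<le> l2_norm (proj (n + k * r) v))
    \<and> (\<forall>v\<in>l2. (\<forall>r\<ge>1. l2_norm (Fr r v) = l2_norm (proj n v)
                   \<and> l2_norm (op_adj (Fr r) v) = l2_norm (proj (n + k * r) v))
              \<longrightarrow> v = (\<lambda>m. 0))"
proof -
  interpret opset n k x .
  have Tb: "bounded_op T" and Tc: "\<And>v. v \<in> l2 \<Longrightarrow> l2_norm (T v) \<le> l2_norm v"
    using contr unfolding is_contraction_def by auto
  have Tl2: "\<And>v. v \<in> l2 \<Longrightarrow> T v \<in> l2" using Tb unfolding bounded_op_def by blast
  have Tp: "(T ^^ j) v \<in> l2 \<and> l2_norm ((T ^^ j) v) \<le> l2_norm v" if v: "v \<in> l2" for j v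
  proof (induction j)
    case 0 then show ?case using v by simp
  next
    case (Suc j)
    then show ?case using Tl2 Tc by (auto intro: order_trans)
  qed
  have Tz: "T z = fop n X z" if z: "supp_in n z" for z
  proof -
    have "tail z = (\<lambda>m. 0)"
    proof (intro ext)
      fix m
      show "tail z m = 0"
      proof (cases "n + k < m")
        case True
        hence "m - k \<notin> {1..n}" by auto
        thus ?thesis unfolding tail_def using True supp_in_zero[OF z] by simp
      next
        case False then show ?thesis by (simp add: tail_def)
      qed
    qed
    thus ?thesis unfolding T_def Top_eq by simp
  qed
  have ctr: "nrm (n + k) (fop n X z) \<le> nrm n z" if z: "supp_in n z" for z
  proof -
    have "l2_norm (T z) \<le> l2_norm z" by (rule Tc[OF supp_in_l2[OF z]])
    thus ?thesis unfolding Tz[OF z] supp_in_norm[OF fop_supp[OF X_good]] supp_in_norm[OF z] .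
  qed
  interpret opctr n k x by unfold_locales (rule ctr)
  define D' where "D' = (\<lambda>v m. v m - op_adj T (T v) m)"
  define S where "S = op_sqrt D'"
  have D'_eq: "D' v = Dc v" if v: "v \<in> l2" for v
    unfolding D'_def T_def by (rule D_eq[OF v Tl2[OF v, unfolded T_def]])
  have "\<exists>B. positive_op B \<and> (\<forall>v\<in>l2. B (B v) = D' v)"
    using sqrt_exists D'_eq by metis
  hence "positive_op S \<and> (\<forall>v\<in>l2. S (S v) = D' v)"
    unfolding S_def op_sqrt_def by (rule someI_ex)
  hence Spos: "positive_op S" and SS: "\<forall>v\<in>l2. S (S v) = Dc v" using D'_eq by auto
  have hd: "has_dim (l2_closure (S ` l2)) n"
    using finT unfolding defect_space_def S_def D'_def .
  interpret opfull n k x S by unfold_locales (use Spos SS hd in auto)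
  have F1e: "F1 = fop n X" unfolding F1_def F1_eq ..
  have F1adj: "op_adj F1 v = fadj n (n + k) X v" if "v \<in> l2" for v
    unfolding F1e by (rule op_adj_fop[OF X_good that])
  have P1: "has_dim ((\<lambda>v m. proj n v m - op_adj F1 (F1 v) m) ` l2) n"
  proof -
    have "(\<lambda>v m. proj n v m - op_adj F1 (F1 v) m) ` l2 = Dc ` l2"
    proof (rule image_cong[OF refl])
      fix v assume "v \<in> l2"
      have fl: "fop n X v \<in> l2" by (rule supp_in_l2[OF fop_supp[OF X_good]])
      have "op_adj F1 (F1 v) = G v" unfolding G_def using F1adj[OF fl] F1e by simp
      thus "(\<lambda>m. proj n v m - op_adj F1 (F1 v) m) = Dc v" unfolding Dc_def by simp
    qed
    thus ?thesis using has_dim_Dc by simp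
  qed
  have P2: "\<forall>v\<in>l2. F1 (\<lambda>m. v m - proj n v m) = (\<lambda>m. 0)
                \<and> (\<lambda>m. F1 v m - proj (n + k) (F1 v) m) = (\<lambda>m. 0)"
  proof (intro ballI conjI)
    fix v :: "nat \<Rightarrow> complex"
    show "F1 (\<lambda>m. v m - proj n v m) = (\<lambda>m. 0)"
      unfolding F1e fop_def proj_def by (intro ext) simp
    show "(\<lambda>m. F1 v m - proj (n + k) (F1 v) m) = (\<lambda>m. 0)"
    proof (intro ext)
      fix m
      show "F1 v m - proj (n + k) (F1 v) m = 0"
        using supp_in_zero[OF fop_supp[OF X_good, of n v], of m] unfolding F1e proj_def by auto
    qed
  qed
  obtain mu where mu: "mu > 0" "mu \<le> 1" "\<And>z. supp_in n z \<Longrightarrow> (nrm (n + k) (fop n X z))^2 \<le> (1 - mu) * (nrm n z)^2"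
    using uniform_F by blast
  have P3: "\<exists>lam\<ge>0. \<forall>v\<in>l2. lam * (l2_norm (op_adj F1 v))^2 - (l2_norm (F1 v))^2
                      \<le> lam * (l2_norm (proj (n + k) v))^2 - (l2_norm (proj n v))^2"
  proof (intro exI[of _ "1 / mu"] conjI ballI)
    show "0 \<le> 1 / mu" using mu by simp
    fix v :: "nat \<Rightarrow> complex" assume v: "v \<in> l2"
    have a1: "l2_norm (op_adj F1 v) = nrm n (fadj n (n + k) X v)"
      unfolding F1adj[OF v] by (rule supp_in_norm[OF fadj_supp])
    have a2: "(nrm n (fadj n (n + k) X v))^2 \<le> (1 - mu) * (nrm (n + k) v)^2"
      by (rule adj_transfer_mu[OF X_good _ mu(3)]) (use mu in simp)
    have a3: "nrm n v \<le> nrm (n + k) v" by (rule nrm_mono) simp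
    have a4: "(nrm n v)^2 \<le> (nrm (n + k) v)^2" by (rule power_mono[OF a3 nrm_nonneg])
    have "1 / mu * (nrm n (fadj n (n + k) X v))^2 \<le> 1 / mu * ((1 - mu) * (nrm (n + k) v)^2)"
      by (rule mult_left_mono[OF a2]) (use mu in simp)
    also have "\<dots> = 1 / mu * (nrm (n + k) v)^2 - (nrm (n + k) v)^2"
      using mu by (simp add: field_simps)
    finally have "1 / mu * (nrm n (fadj n (n + k) X v))^2 - (l2_norm (F1 v))^2
        \<le> 1 / mu * (nrm (n + k) v)^2 - (nrm n v)^2"
      using a4 by (smt (verit) zero_le_power2)
    thus "1 / mu * (l2_norm (op_adj F1 v))^2 - (l2_norm (F1 v))^2
        \<le> 1 / mu * (l2_norm (proj (n + k) v))^2 - (l2_norm (proj n v))^2"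
      unfolding a1 norm_proj .
  qed
  have Frf: "Fr r = fop n (ar r)" if r: "1 \<le> r" for r
    unfolding Fr_def by (rule Fr_fop[OF r])
  have FrT: "Fr r v = (T ^^ r) (proj n v)" if r: "1 \<le> r" for r v
    unfolding Fr_def T_def by (rule Fr_T[OF r])
  have Fr_ctr: "nrm (n + k * r) (fop n (ar r) z) \<le> nrm n z" if r: "1 \<le> r" and z: "supp_in n z" for r z
  proof -
    have "fop n (ar r) z = (T ^^ r) (proj n z)" using FrT[OF r] Frf[OF r] by metis
    also have "proj n z = z" using supp_in_zero[OF z] by (auto simp: proj_def intro!: ext)
    finally have e: "fop n (ar r) z = (T ^^ r) z" .
    have "l2_norm ((T ^^ r) z) \<le> l2_norm z" using Tp[OF supp_in_l2[OF z]] by blast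
    thus ?thesis unfolding e[symmetric] supp_in_norm[OF fop_supp[OF ar_good]] supp_in_norm[OF z] .
  qed
  have Fr_strict: "nrm (n + k * r) (fop n (ar r) z) < nrm n z"
    if r: "1 \<le> r" and z: "supp_in n z" and z0: "z \<noteq> (\<lambda>m. 0)" for r z
  proof -
    have "fop n (ar r) z = (T ^^ r) (proj n z)" using FrT[OF r] Frf[OF r] by metis
    also have "proj n z = z" using supp_in_zero[OF z] by (auto simp: proj_def intro!: ext)
    also have "(T ^^ r) z = (T ^^ (r - 1)) (T z)"
    proof -
      have "r = (r - 1) + 1" using r by simp
      hence "T ^^ r = T ^^ (r - 1) \<circ> T ^^ 1" by (metis funpow_add)
      thus ?thesis by simp
    qed
    finally have e: "fop n (ar r) z = (T ^^ (r - 1)) (fop n X z)" unfolding Tz[OF z] .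
    have fl: "fop n X z \<in> l2" by (rule supp_in_l2[OF fop_supp[OF X_good]])
    have "l2_norm ((T ^^ (r - 1)) (fop n X z)) \<le> l2_norm (fop n X z)" using Tp[OF fl] by blast
    also have "\<dots> = nrm (n + k) (fop n X z)" by (rule supp_in_norm[OF fop_supp[OF X_good]])
    also have "\<dots> < nrm n z" by (rule strict[OF z z0])
    finally show ?thesis unfolding e[symmetric] supp_in_norm[OF fop_supp[OF ar_good]] .
  qed
  have Fradj: "op_adj (Fr r) v = fadj n (n + k * r) (ar r) v" if r: "1 \<le> r" and v: "v \<in> l2" for r v
    unfolding Frf[OF r] by (rule op_adj_fop[OF ar_good v])
  have P4: "\<forall>r\<ge>1. \<forall>v\<in>l2. l2_norm (Fr r v) \<le> l2_norm (proj n v)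
                   \<and> l2_norm (op_adj (Fr r) v) \<le> l2_norm (proj (n + k * r) v)"
  proof (intro allI impI ballI conjI)
    fix r :: nat and v :: "nat \<Rightarrow> complex" assume r: "1 \<le> r" and v: "v \<in> l2"
    show "l2_norm (Fr r v) \<le> l2_norm (proj n v)"
      unfolding FrT[OF r] using Tp[OF supp_in_l2[OF proj_supp]] by blast
    have "l2_norm (op_adj (Fr r) v) = nrm n (fadj n (n + k * r) (ar r) v)"
      unfolding Fradj[OF r v] by (rule supp_in_norm[OF fadj_supp])
    also have "\<dots> \<le> nrm (n + k * r) v"
      by (rule adj_transfer[OF ar_good Fr_ctr[OF r]])
    finally show "l2_norm (op_adj (Fr r) v) \<le> l2_norm (proj (n + k * r) v)" unfolding norm_proj .
  qed
  have P5: "\<forall>v\<in>l2. (\<forall>r\<ge>1. l2_norm (Fr r v) = l2_norm (proj n v)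
                   \<and> l2_norm (op_adj (Fr r) v) = l2_norm (proj (n + k * r) v))
              \<longrightarrow> v = (\<lambda>m. 0)"
  proof (intro ballI impI ext)
    fix v :: "nat \<Rightarrow> complex" and m :: nat
    assume v: "v \<in> l2" and h: "\<forall>r\<ge>1. l2_norm (Fr r v) = l2_norm (proj n v)
                   \<and> l2_norm (op_adj (Fr r) v) = l2_norm (proj (n + k * r) v)"
    show "v m = 0"
    proof (cases "m = 0")
      case True then show ?thesis using l2_zero0[OF v] by simp
    next
      case False
      hence m: "1 \<le> m" by simp
      have "l2_norm (op_adj (Fr m) v) = l2_norm (proj (n + k * m) v)" using h m by blast
      hence eq: "nrm n (fadj n (n + k * m) (ar m) v) = nrm (n + k * m) v"
        unfolding Fradj[OF m v] supp_in_norm[OF fadj_supp] norm_proj .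
      have "m \<le> n + k * m" using k by (metis le_add2 mult_le_mono1 mult_1 order_trans)
      thus ?thesis using adj_transfer_strict[OF ar_good Fr_strict[OF m] eq m] by blast
    qed
  qed
  show ?thesis using P1 P2 P3 P4 P5 by blast
qed

end
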